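(* Let $M>0$, $|Q|\le M$, and consider the exterior of the Reissner–Nordström spacetime in double null coordinates $(u,v,\theta,\phi)$ as described in the context. Let $u_0,v_0\in\mathbb{R}$ and let $\xi,\Xi$ be smooth $S^2_{u,v}$-tensor fields (of the same type) on $\{u\ge u_0,\ v\ge v_0\}$ satisfying $$\Omega\nabla_4\xi=\Omega^2\,\Xi ,$$ and assume that, if $|Q|<M$, $\xi(u,v_0,\cdot)=\mathcal{O}(\Omega(u,v_0))$ as $u\to\infty$. Then for every $u\ge u_0$ (fixed outgoing cone $C_u=\{u\}\times\{v\ge v_0\}\times S^2$), $$\limsup_{v\to\infty}\|\xi\|^2(u,v)\le\frac{1}{1-\frac{r_+}{r(u,v_0)}}\|\xi\|^2(u,v_0)+\frac{1}{r_+}\int_{v_0}^{\infty}\int_{S^2}\big|\Omega r\,\Xi\big|^2\,dv\,\varepsilon_{S^2},$$ and $$\int_{v_0}^{\infty}\int_{S^2}\frac{\Omega^2}{r^2}|\xi|^2\,dv\,\varepsilon_{S^2}\le C\Big(\|\xi\|^2(u,v_0)+\frac{1}{r_+}\int_{v_0}^{\infty}\int_{S^2}\big|\Omega r\,\Xi\big|^2\,dv\,\varepsilon_{S^2}\Big),$$ for a constant $C$ depending only on $M,Q$.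
   Context: Reissner–Nordström exterior: $r_+=M+\sqrt{M^2-Q^2}$, $\Omega^2(r)=1-\frac{2M}{r}+\frac{Q^2}{r^2}$, and $r=r(u,v)>r_+$ is defined by $r_\star(r)=v-u$ where $dr_\star/dr=\Omega^{-2}$; the metric is $g=-2\Omega^2(du\otimes dv+dv\otimes du)+r^2\gamma$ with $\gamma$ the unit round metric, so $\partial_vr=\Omega^2$, $\partial_ur=-\Omega^2$; the event horizon corresponds to $u=\infty$. $S^2_{u,v}$ denotes the sphere of constant $(u,v)$ with metric $r^2\gamma$; an $S^2_{u,v}$-tensor field is a covariant tensor field tangent to these spheres. $e_4=\Omega^{-1}\partial_v$, and $\nabla_4$ is the projection onto $S^2_{u,v}$ of the spacetime covariant derivative along $e_4$. Pointwise norms $|\cdot|$ are with respect to $r^2\gamma$, $\varepsilon_{S^2}$ is the volume form of the unit sphere, and $\|\xi\|^2(u,v)=\int_{S^2}|\xi|^2(u,v,\theta,\phi)\,\varepsilon_{S^2}$. *)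

theory Defs
  imports "HOL-Analysis.Analysis"
begin

definition rplus :: "real \<Rightarrow> real \<Rightarrow> real" where
  "rplus M Q = M + sqrt (M\<^sup>2 - Q\<^sup>2)"

definition Om2 :: "real \<Rightarrow> real \<Rightarrow> real \<Rightarrow> real" where
  "Om2 M Q \<rho> = 1 - 2 * M / \<rho> + Q\<^sup>2 / \<rho>\<^sup>2"

text \<open>A tortoise coordinate: any function with d r_star / d r = Omega^(-2) on (r_+, infinity).
  (It is determined up to an additive constant; the theorem quantifies over all choices.)\<close>
definition is_tortoise :: "real \<Rightarrow> real \<Rightarrow> (real \<Rightarrow> real) \<Rightarrow> bool" where
  "is_tortoise M Q rs \<longleftrightarrow>
     (\<forall>\<rho>>rplus M Q. (rs has_real_derivative (1 / Om2 M Q \<rho>)) (at \<rho>))"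

definition rad :: "real \<Rightarrow> real \<Rightarrow> (real \<Rightarrow> real) \<Rightarrow> real \<Rightarrow> real \<Rightarrow> real" where
  "rad M Q rs u v = (THE \<rho>. \<rho> > rplus M Q \<and> rs \<rho> = v - u)"

definition Om2uv :: "real \<Rightarrow> real \<Rightarrow> (real \<Rightarrow> real) \<Rightarrow> real \<Rightarrow> real \<Rightarrow> real" where
  "Om2uv M Q rs u v = Om2 M Q (rad M Q rs u v)"

text \<open>A covariant k-tensor tangent to the sphere is represented through the embedding of the unit
  sphere in R^3: a point of S^2 is a unit vector omega, and a k-tensor at omega is given by its
  components with respect to the Cartesian basis of R^3 (a function on index lists of length k),
  required to be tangential (contraction of any slot with the normal omega vanishes).
  Components are taken w.r.t. the unit round metric gamma; the physical metric is r^2 gamma.\<close>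

type_synonym tens = "3 list \<Rightarrow> real"

definition idx :: "nat \<Rightarrow> 3 list set" where
  "idx k = {is. length is = k}"

definition tangential :: "nat \<Rightarrow> real^3 \<Rightarrow> tens \<Rightarrow> bool" where
  "tangential k \<omega> T \<longleftrightarrow>
     (\<forall>is\<in>idx k. \<forall>j<k. (\<Sum>a\<in>UNIV. \<omega> $ a * T (is[j := a])) = 0)"

definition gnorm2 :: "nat \<Rightarrow> tens \<Rightarrow> real" where
  "gnorm2 k T = (\<Sum>is\<in>idx k. (T is)\<^sup>2)"

definition pnorm2 :: "real \<Rightarrow> real \<Rightarrow> (real \<Rightarrow> real) \<Rightarrow> nat
    \<Rightarrow> (real \<Rightarrow> real \<Rightarrow> real^3 \<Rightarrow> tens) \<Rightarrow> real \<Rightarrow> real \<Rightarrow> real^3 \<Rightarrow> real" where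
  "pnorm2 M Q rs k \<xi> u v \<omega> = gnorm2 k (\<xi> u v \<omega>) / (rad M Q rs u v) ^ (2 * k)"

fun pderivs :: "'a::euclidean_space list \<Rightarrow> ('a \<Rightarrow> real) \<Rightarrow> 'a \<Rightarrow> real" where
  "pderivs [] f = f"
| "pderivs (d # ds) f = (\<lambda>x. deriv (\<lambda>t. pderivs ds f (x + t *\<^sub>R d)) 0)"

definition smooth_on_open :: "'a::euclidean_space set \<Rightarrow> ('a \<Rightarrow> real) \<Rightarrow> bool" where
  "smooth_on_open S f \<longleftrightarrow> open S \<and>
     (\<forall>ds. set ds \<subseteq> Basis \<longrightarrow> continuous_on S (pderivs ds f) \<and>
        (\<forall>d\<in>Basis. \<forall>x\<in>S. (\<lambda>t. pderivs ds f (x + t *\<^sub>R d)) differentiable (at 0)))"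

definition region :: "real \<Rightarrow> real \<Rightarrow> (real \<times> real \<times> (real^3)) set" where
  "region u0 v0 = {(u, v, \<omega>). u \<ge> u0 \<and> v \<ge> v0 \<and> \<omega> \<in> sphere 0 1}"

definition S2_tensor_field :: "nat \<Rightarrow> real \<Rightarrow> real \<Rightarrow> (real \<Rightarrow> real \<Rightarrow> real^3 \<Rightarrow> tens) \<Rightarrow> bool" where
  "S2_tensor_field k u0 v0 \<xi> \<longleftrightarrow>
     (\<forall>(u, v, \<omega>)\<in>region u0 v0. tangential k \<omega> (\<xi> u v \<omega>)) \<and>
     (\<forall>is\<in>idx k. \<exists>S f. smooth_on_open S f \<and> region u0 v0 \<subseteq> S \<and>
        (\<forall>(u, v, \<omega>)\<in>region u0 v0. f (u, v, \<omega>) = \<xi> u v \<omega> is))"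

text \<open>Omega nabla_4 xi for a covariant k-tensor: in angular components
  Omega nabla_4 xi = d_v xi - k (Omega^2 / r) xi, since chi = (Omega / r) g (Omega tr chi = 2 Omega^2/r).\<close>
definition Om_nabla4 :: "real \<Rightarrow> real \<Rightarrow> (real \<Rightarrow> real) \<Rightarrow> nat \<Rightarrow> real
    \<Rightarrow> (real \<Rightarrow> real \<Rightarrow> real^3 \<Rightarrow> tens) \<Rightarrow> real \<Rightarrow> real \<Rightarrow> real^3 \<Rightarrow> tens" where
  "Om_nabla4 M Q rs k v0 \<xi> u v \<omega> = (\<lambda>is.
     vector_derivative (\<lambda>v'. \<xi> u v' \<omega> is) (at v within {v0..})
     - real k * Om2uv M Q rs u v / rad M Q rs u v * \<xi> u v \<omega> is)"

definition sph :: "real \<Rightarrow> real \<Rightarrow> real^3" where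
  "sph \<theta> \<phi> = vector [sin \<theta> * cos \<phi>, sin \<theta> * sin \<phi>, cos \<theta>]"

definition sph_int :: "(real^3 \<Rightarrow> ennreal) \<Rightarrow> ennreal" where
  "sph_int f = (\<integral>\<^sup>+ \<theta>. (\<integral>\<^sup>+ \<phi>. f (sph \<theta> \<phi>) * ennreal (sin \<theta>)
       * indicator {0..2*pi} \<phi> \<partial>lborel) * indicator {0..pi} \<theta> \<partial>lborel)"

definition L2sq :: "real \<Rightarrow> real \<Rightarrow> (real \<Rightarrow> real) \<Rightarrow> nat
    \<Rightarrow> (real \<Rightarrow> real \<Rightarrow> real^3 \<Rightarrow> tens) \<Rightarrow> real \<Rightarrow> real \<Rightarrow> ennreal" where
  "L2sq M Q rs k \<xi> u v = sph_int (\<lambda>\<omega>. ennreal (pnorm2 M Q rs k \<xi> u v \<omega>))"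

definition flux :: "real \<Rightarrow> real \<Rightarrow> (real \<Rightarrow> real) \<Rightarrow> nat
    \<Rightarrow> (real \<Rightarrow> real \<Rightarrow> real^3 \<Rightarrow> tens) \<Rightarrow> real \<Rightarrow> real \<Rightarrow> ennreal" where
  "flux M Q rs k \<Xi> u v0 = (\<integral>\<^sup>+ v. sph_int (\<lambda>\<omega>. ennreal (Om2uv M Q rs u v * (rad M Q rs u v)\<^sup>2
       * pnorm2 M Q rs k \<Xi> u v \<omega>)) * indicator {v0..} v \<partial>lborel)"

definition bulk :: "real \<Rightarrow> real \<Rightarrow> (real \<Rightarrow> real) \<Rightarrow> nat
    \<Rightarrow> (real \<Rightarrow> real \<Rightarrow> real^3 \<Rightarrow> tens) \<Rightarrow> real \<Rightarrow> real \<Rightarrow> ennreal" where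
  "bulk M Q rs k \<xi> u v0 = (\<integral>\<^sup>+ v. sph_int (\<lambda>\<omega>. ennreal (Om2uv M Q rs u v / (rad M Q rs u v)\<^sup>2
       * pnorm2 M Q rs k \<xi> u v \<omega>)) * indicator {v0..} v \<partial>lborel)"

end

theory Submission
  imports Defs
begin

lemma QM: "\<bar>Q\<bar> \<le> (M::real) \<Longrightarrow> Q\<^sup>2 \<le> M\<^sup>2"
  using abs_le_square_iff[of Q M] by auto

lemma rplus_pos: assumes "M > 0" "\<bar>Q\<bar> \<le> M" shows "rplus M Q \<ge> M"
proof -
  have "M\<^sup>2 - Q\<^sup>2 \<ge> 0" using QM[OF assms(2)] by linarith
  hence "sqrt (M\<^sup>2 - Q\<^sup>2) \<ge> 0" by (rule real_sqrt_ge_zero)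
  thus ?thesis unfolding rplus_def by linarith
qed

lemma Om2_factor:
  assumes "\<bar>Q\<bar> \<le> M" "\<rho> > 0"
  shows "Om2 M Q \<rho> = (\<rho> - rplus M Q) * (\<rho> - (M - sqrt (M\<^sup>2 - Q\<^sup>2))) / \<rho>\<^sup>2"
proof -
  have h: "M\<^sup>2 - Q\<^sup>2 \<ge> 0" using QM[OF assms(1)] by simp
  have s: "(sqrt (M\<^sup>2 - Q\<^sup>2))\<^sup>2 = M\<^sup>2 - Q\<^sup>2" using h by simp
  show ?thesis using assms s unfolding Om2_def rplus_def
    by (simp add: field_simps power2_eq_square)
qed

lemma Om2_pos:
  assumes "M > 0" "\<bar>Q\<bar> \<le> M" "\<rho> > rplus M Q"
  shows "Om2 M Q \<rho> > 0"
proof -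
  have rp: "rplus M Q \<ge> M" using assms rplus_pos by auto
  have sq: "sqrt (M\<^sup>2 - Q\<^sup>2) \<ge> 0" using QM[OF assms(2)] by simp
  have "\<rho> > 0" using assms rp by linarith
  moreover have "\<rho> - (M - sqrt (M\<^sup>2 - Q\<^sup>2)) > 0" using assms sq unfolding rplus_def by linarith
  ultimately show ?thesis using Om2_factor[OF assms(2)] assms(3) by simp
qed

lemma Om2_le1:
  assumes "M > 0" "\<bar>Q\<bar> \<le> M" "\<rho> > rplus M Q"
  shows "Om2 M Q \<rho> \<le> 1"
proof -
  have rp: "rplus M Q \<ge> M" using assms rplus_pos by auto
  hence r: "\<rho> > 0" "\<rho> \<ge> M" using assms by linarith+
  have "Q\<^sup>2 \<le> M\<^sup>2" using QM assms by simp
  also have "\<dots> \<le> 2 * M * \<rho>" using r assms by (simp add: power2_eq_square mult_mono)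
  finally have "Q\<^sup>2 / \<rho>\<^sup>2 \<le> 2 * M / \<rho>" using r by (simp add: field_simps power2_eq_square)
  thus ?thesis unfolding Om2_def by simp
qed

lemma Om2_le_lin:
  assumes "M > 0" "\<bar>Q\<bar> \<le> M" "\<rho> > rplus M Q"
  shows "Om2 M Q \<rho> \<le> (\<rho> - rplus M Q) / rplus M Q"
proof -
  have rp: "rplus M Q \<ge> M" using assms rplus_pos by auto
  hence r: "\<rho> > 0" using assms by linarith
  have h: "M\<^sup>2 - Q\<^sup>2 \<le> M\<^sup>2" by simp
  have "sqrt (M\<^sup>2 - Q\<^sup>2) \<le> M" using assms real_sqrt_le_mono[OF h] by simp
  hence rm: "M - sqrt (M\<^sup>2 - Q\<^sup>2) \<ge> 0" by simp
  have "(\<rho> - (M - sqrt (M\<^sup>2 - Q\<^sup>2))) / \<rho>\<^sup>2 \<le> 1 / \<rho>"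
    using r rm by (simp add: field_simps power2_eq_square)
  also have "\<dots> \<le> 1 / rplus M Q" using r assms rp by (simp add: frac_le)
  finally have "(\<rho> - rplus M Q) * ((\<rho> - (M - sqrt (M\<^sup>2 - Q\<^sup>2))) / \<rho>\<^sup>2) \<le> (\<rho> - rplus M Q) * (1 / rplus M Q)"
    using assms by (intro mult_left_mono) auto
  thus ?thesis using Om2_factor[OF assms(2) r] by simp
qed

context
  fixes M Q :: real and rs :: "real \<Rightarrow> real"
  assumes M: "M > 0" and QM: "\<bar>Q\<bar> \<le> M" and T: "is_tortoise M Q rs"
begin

lemma tort_deriv: "\<rho> > rplus M Q \<Longrightarrow> (rs has_real_derivative (1 / Om2 M Q \<rho>)) (at \<rho>)"
  using T unfolding is_tortoise_def by auto

lemma tort_cont: "continuous_on {rplus M Q<..} rs"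
  by (rule DERIV_continuous_on[where D="\<lambda>\<rho>. 1 / Om2 M Q \<rho>"])
     (auto intro: has_field_derivative_at_within tort_deriv)

lemma tort_strict: assumes "rplus M Q < a" "a < b" shows "rs a < rs b"
proof (rule DERIV_pos_imp_increasing[OF assms(2)])
  fix x assume "a \<le> x" "x \<le> b"
  hence x: "x > rplus M Q" using assms by linarith
  show "\<exists>y. DERIV rs x :> y \<and> y > 0"
    using tort_deriv[OF x] Om2_pos[OF M QM x] by auto
qed

lemma tort_upper: assumes "rplus M Q < a" "a \<le> b" shows "rs b - rs a \<ge> b - a"
proof -
  have "(\<lambda>x. rs x - x) a \<le> (\<lambda>x. rs x - x) b"
  proof (rule DERIV_nonneg_imp_increasing_open[OF assms(2)])
    fix x assume "a < x" "x < b"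
    hence x: "x > rplus M Q" using assms by linarith
    have "1 / Om2 M Q x \<ge> 1" using Om2_pos[OF M QM x] Om2_le1[OF M QM x] by simp
    thus "\<exists>y. ((\<lambda>x. rs x - x) has_real_derivative y) (at x) \<and> y \<ge> 0"
      using tort_deriv[OF x] by (intro exI[of _ "1 / Om2 M Q x - 1"]) (auto intro!: derivative_eq_intros)
  next
    show "continuous_on {a..b} (\<lambda>x. rs x - x)"
      using tort_cont assms by (intro continuous_intros) (auto elim: continuous_on_subset)
  qed
  thus ?thesis by simp
qed

lemma tort_lower: assumes "rplus M Q < a" "a \<le> b"
  shows "rs a - rplus M Q * ln (a - rplus M Q) \<le> rs b - rplus M Q * ln (b - rplus M Q)"
proof -
  let ?rp = "rplus M Q"
  have rp: "?rp > 0" using rplus_pos[OF M QM] M by linarith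
  show ?thesis
  proof (rule DERIV_nonneg_imp_increasing_open[OF assms(2), where f="\<lambda>x. rs x - ?rp * ln (x - ?rp)"])
    fix x assume "a < x" "x < b"
    hence x: "x > ?rp" using assms by linarith
    have O: "Om2 M Q x > 0" "Om2 M Q x \<le> (x - ?rp) / ?rp" using Om2_pos[OF M QM x] Om2_le_lin[OF M QM x] by auto
    have "?rp / (x - ?rp) \<le> 1 / Om2 M Q x" using O x rp
      by (simp add: field_simps)
    thus "\<exists>y. ((\<lambda>x. rs x - ?rp * ln (x - ?rp)) has_real_derivative y) (at x) \<and> y \<ge> 0"
      using tort_deriv[OF x] x
      by (intro exI[of _ "1 / Om2 M Q x - ?rp * (1 / (x - ?rp))"])
         (auto intro!: derivative_eq_intros)
  next
    have "continuous_on {a..b} (\<lambda>x. ln (x - ?rp))"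
      using assms by (intro continuous_intros) auto
    thus "continuous_on {a..b} (\<lambda>x. rs x - ?rp * ln (x - ?rp))"
      using tort_cont assms by (intro continuous_intros) (auto elim: continuous_on_subset)
  qed
qed

lemma tort_surj: "\<exists>\<rho>>rplus M Q. rs \<rho> = y"
proof -
  let ?rp = "rplus M Q"
  have rp: "?rp > 0" using rplus_pos[OF M QM] M by linarith
  define \<rho>1 where "\<rho>1 = ?rp + 1"
  define C where "C = rs \<rho>1"
  define a where "a = ?rp + exp (- (\<bar>y\<bar> + \<bar>C\<bar> + 1) / ?rp)"
  define b where "b = \<rho>1 + \<bar>y\<bar> + \<bar>C\<bar> + 1"
  have ea: "exp (- (\<bar>y\<bar> + \<bar>C\<bar> + 1) / ?rp) < 1" using rp
    by (simp add: divide_neg_pos)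
  have a: "?rp < a" "a \<le> \<rho>1" unfolding a_def \<rho>1_def using ea by auto
  have "rs a - ?rp * ln (a - ?rp) \<le> rs \<rho>1 - ?rp * ln (\<rho>1 - ?rp)" by (rule tort_lower[OF a])
  hence "rs a \<le> C - (\<bar>y\<bar> + \<bar>C\<bar> + 1)" unfolding a_def \<rho>1_def C_def using rp by simp
  hence ya: "rs a \<le> y" by linarith
  have b: "?rp < \<rho>1" "\<rho>1 \<le> b" unfolding b_def \<rho>1_def by auto
  have "rs b - rs \<rho>1 \<ge> b - \<rho>1" by (rule tort_upper[OF b])
  hence yb: "y \<le> rs b" unfolding b_def C_def by linarith
  have ab: "a \<le> b" using a b by linarith
  have "continuous_on {a..b} rs" using tort_cont a by (auto elim: continuous_on_subset)
  from IVT'[of rs a y b, OF ya yb ab this] obtain x where "a \<le> x" "x \<le> b" "rs x = y" by auto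
  thus ?thesis using a by (intro exI[of _ x]) auto
qed

lemma tort_inj: "\<rho>1 > rplus M Q \<Longrightarrow> \<rho>2 > rplus M Q \<Longrightarrow> rs \<rho>1 = rs \<rho>2 \<Longrightarrow> \<rho>1 = \<rho>2"
  using tort_strict by (metis linorder_neqE_linordered_idom order_less_irrefl)

definition "ginv y = (THE \<rho>. \<rho> > rplus M Q \<and> rs \<rho> = y)"

lemma ginv: "ginv y > rplus M Q \<and> rs (ginv y) = y"
proof -
  obtain \<rho> where "\<rho> > rplus M Q" "rs \<rho> = y" using tort_surj by blast
  hence "\<exists>!\<rho>. \<rho> > rplus M Q \<and> rs \<rho> = y" using tort_inj by blast
  thus ?thesis unfolding ginv_def by (rule theI')
qed

lemma ginv_rs: "z > rplus M Q \<Longrightarrow> ginv (rs z) = z"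
  using ginv[of "rs z"] tort_inj by blast

lemma rad_eq: "rad M Q rs u v = ginv (v - u)"
  unfolding rad_def ginv_def ..

lemma rad_gt: "rad M Q rs u v > rplus M Q"
  using ginv rad_eq by auto

lemma ginv_deriv: "(ginv has_real_derivative Om2 M Q (ginv y)) (at y)"
proof -
  let ?rp = "rplus M Q"
  have g: "ginv y > ?rp" using ginv by blast
  have O: "Om2 M Q (ginv y) > 0" using Om2_pos[OF M QM g] .
  have h1: "\<And>z. (?rp + ginv y)/2 \<le> z \<Longrightarrow> z \<le> ginv y + 1 \<Longrightarrow> ginv (rs z) = z"
    using g ginv_rs by (simp add: field_simps)
  have h2: "\<And>z. (?rp + ginv y)/2 \<le> z \<Longrightarrow> z \<le> ginv y + 1 \<Longrightarrow> isCont rs z"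
  proof -
    fix z assume "(?rp + ginv y)/2 \<le> z" "z \<le> ginv y + 1"
    hence z: "z > ?rp" using g by (simp add: field_simps)
    show "isCont rs z" using tort_deriv[OF z] by (rule DERIV_isCont)
  qed
  have c: "isCont ginv (rs (ginv y))"
    by (rule isCont_inverse_function2[where a="(?rp + ginv y)/2" and b="ginv y + 1", OF _ _ h1 h2])
       (use g in \<open>auto simp: field_simps\<close>)
  have "(ginv has_real_derivative inverse (1 / Om2 M Q (ginv y))) (at y)"
  proof (rule DERIV_inverse_function[where a="y - 1" and b="y + 1"])
    show "DERIV rs (ginv y) :> 1 / Om2 M Q (ginv y)" using tort_deriv[OF g] .
    show "isCont ginv y" using c ginv by simp
  qed (use O ginv in auto)
  thus ?thesis by simp
qed

lemma rad_deriv: "((\<lambda>v. rad M Q rs u v) has_real_derivative Om2uv M Q rs u v) (at v within S)"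
proof -
  have "((\<lambda>v. ginv (v - u)) has_real_derivative Om2 M Q (ginv (v - u)) * 1) (at v)"
    by (rule DERIV_chain2[OF ginv_deriv]) (auto intro!: derivative_eq_intros)
  thus ?thesis unfolding rad_eq Om2uv_def by (auto intro: has_field_derivative_at_within)
qed

lemma Om2uv_pos: "Om2uv M Q rs u v > 0"
  unfolding Om2uv_def using Om2_pos[OF M QM rad_gt] .

lemma rad_cont: "continuous_on S (\<lambda>v. rad M Q rs u v)"
  by (rule DERIV_continuous_on[OF rad_deriv])

lemma Om2uv_cont: "continuous_on S (\<lambda>v. Om2uv M Q rs u v)"
proof -
  have "\<And>v. rad M Q rs u v \<noteq> 0" using rad_gt rplus_pos[OF M QM] M
    by (metis less_le_not_le order.strict_trans1)
  thus ?thesis unfolding Om2uv_def Om2_def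
    by (intro continuous_intros rad_cont) auto
qed

end

lemma decr:
  fixes \<Phi> \<Phi>' :: "real \<Rightarrow> real"
  assumes ab: "a \<le> b"
    and d: "\<And>x. x \<in> {a..b} \<Longrightarrow> (\<Phi> has_real_derivative \<Phi>' x) (at x within {a..b})"
    and n: "\<And>x. a < x \<Longrightarrow> x < b \<Longrightarrow> \<Phi>' x \<le> 0"
  shows "\<Phi> b \<le> \<Phi> a"
proof (rule DERIV_nonpos_imp_decreasing_open[OF ab])
  fix x assume x: "a < x" "x < b"
  have "(\<Phi> has_real_derivative \<Phi>' x) (at x)"
    using d[of x] x at_within_Icc_at[OF x] by auto
  thus "\<exists>y. DERIV \<Phi> x :> y \<and> y \<le> 0" using n[OF x] by blast
next
  show "continuous_on {a..b} \<Phi>" by (rule DERIV_continuous_on[OF d])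
qed

lemma amgm: "(\<epsilon>::real) > 0 \<Longrightarrow> 2 * a * b \<le> \<epsilon> * a\<^sup>2 + b\<^sup>2 / \<epsilon>"
proof -
  assume e: "\<epsilon> > 0"
  have "0 \<le> (\<epsilon> * a - b)\<^sup>2 / \<epsilon>" using e by simp
  also have "\<dots> = \<epsilon> * a\<^sup>2 - 2 * a * b + b\<^sup>2 / \<epsilon>" using e
    by (simp add: field_simps power2_eq_square)
  finally show ?thesis by simp
qed

lemma pow_pred: "real (2 * k) * (z::real) ^ (2 * k - Suc 0) * z = real (2 * k) * z ^ (2 * k)"
  by (cases k) (auto simp: algebra_simps)

lemma alg1:
  fixes r R Om G S :: real and k :: nat
  assumes "r \<noteq> 0" "R \<noteq> 0"
  shows "((2 * real k * Om / r * G + 2 * Om * S) * R - G * (Om * (real (2 * k) * R) / r)) / (R * R) = 2 * Om * (S / R)"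
  using assms by (simp add: field_simps)

lemma alg2:
  fixes d r rp p q :: real
  assumes "d \<noteq> 0" "r \<noteq> 0" "rp \<noteq> 0"
  shows "r / d * (rp / (d * r) * p + q / (rp / (d * r))) = rp / d\<^sup>2 * p + r\<^sup>2 * q / rp"
proof -
  have "r / d * (rp / (d * r) * p) = rp / d\<^sup>2 * p" using assms by (simp add: power2_eq_square)
  moreover have "r / d * (q / (rp / (d * r))) = r\<^sup>2 * q / rp" using assms by (simp add: power2_eq_square)
  ultimately show ?thesis by (simp add: distrib_left)
qed

lemma alg3:
  fixes H r rp p q :: real
  assumes "H \<noteq> 0" "r \<noteq> 0" "rp \<noteq> 0"
  shows "H * (rp / (2 * r\<^sup>2 * H) * p + q / (rp / (2 * r\<^sup>2 * H))) = rp / (2 * r\<^sup>2) * p + 2 * H * H * r\<^sup>2 * q / rp"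
proof -
  have "H * (rp / (2 * r\<^sup>2 * H) * p) = rp / (2 * r\<^sup>2) * p" using assms by (simp add: power2_eq_square)
  moreover have "H * (q / (rp / (2 * r\<^sup>2 * H))) = 2 * H * H * r\<^sup>2 * q / rp" using assms by (simp add: power2_eq_square)
  ultimately show ?thesis by (simp add: distrib_left)
qed

lemma pointwise:
  fixes x y :: "'i \<Rightarrow> real \<Rightarrow> real" and r Om :: "real \<Rightarrow> real" and k :: nat
  assumes I: "finite I" and rp: "rp > 0"
    and rder: "\<And>v S. (r has_real_derivative Om v) (at v within S)"
    and rgt: "\<And>v. r v > rp"
    and Opos: "\<And>v. Om v > 0"
    and Ocont: "continuous_on UNIV Om"
    and xder: "\<And>i v. i \<in> I \<Longrightarrow> v \<ge> v0 \<Longrightarrow>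
       (x i has_real_derivative (real k * Om v / r v * x i v + Om v * y i v)) (at v within {v0..})"
    and ycont: "\<And>i. i \<in> I \<Longrightarrow> continuous_on {v0..} (y i)"
  defines "p \<equiv> \<lambda>v. (\<Sum>i\<in>I. (x i v)\<^sup>2) / (r v) ^ (2 * k)"
    and "q \<equiv> \<lambda>v. (\<Sum>i\<in>I. (y i v)\<^sup>2) / (r v) ^ (2 * k)"
  shows "\<And>v. v \<ge> v0 \<Longrightarrow> p v \<le> r v0 / (r v0 - rp) * p v0
            + (1 / rp) * integral {v0..v} (\<lambda>t. Om t * (r t)\<^sup>2 * q t)"
    and "\<And>v. v \<ge> v0 \<Longrightarrow> integral {v0..v} (\<lambda>t. Om t / (r t)\<^sup>2 * p t)
            \<le> 4 / rp * p v0 + 16 / rp\<^sup>2 * integral {v0..v} (\<lambda>t. Om t * (r t)\<^sup>2 * q t)"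
proof -
  define s where "s = (\<lambda>v. (\<Sum>i\<in>I. x i v * y i v) / (r v) ^ (2 * k))"
  have rpos: "\<And>v. r v > 0" using rgt rp by (metis order.strict_trans)
  have rcont: "continuous_on S r" for S by (rule DERIV_continuous_on[OF rder])
  have pd: "(p has_real_derivative 2 * Om v * s v) (at v within {v0..})" if v: "v \<ge> v0" for v
  proof -
    let ?D = "\<lambda>i. real k * Om v / r v * x i v + Om v * y i v"
    have Gd: "((\<lambda>v. \<Sum>i\<in>I. (x i v)\<^sup>2) has_real_derivative (\<Sum>i\<in>I. 2 * x i v * ?D i)) (at v within {v0..})"
    proof (rule DERIV_sum)
      fix i assume i: "i \<in> I"
      show "((\<lambda>v. (x i v)\<^sup>2) has_real_derivative 2 * x i v * ?D i) (at v within {v0..})"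
        using DERIV_power[OF xder[OF i v], of 2] by (simp add: mult_ac)
    qed
    have Rd: "((\<lambda>v. r v ^ (2 * k)) has_real_derivative real (2 * k) * (Om v * r v ^ (2 * k - Suc 0))) (at v within {v0..})"
      by (rule DERIV_power[OF rder[of v "{v0..}"]])
    have R0: "r v ^ (2 * k) \<noteq> 0" using rpos[of v] by simp
    note dd = DERIV_divide[OF Gd Rd R0]
    have sum1: "(\<Sum>i\<in>I. 2 * x i v * ?D i) = 2 * real k * Om v / r v * (\<Sum>i\<in>I. (x i v)\<^sup>2) + 2 * Om v * (\<Sum>i\<in>I. x i v * y i v)"
      by (simp add: sum_distrib_left sum.distrib algebra_simps power2_eq_square sum_divide_distrib)
    have pp: "real (2 * k) * (Om v * r v ^ (2 * k - Suc 0)) = Om v * (real (2 * k) * r v ^ (2 * k)) / r v"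
    proof -
      have "real (2 * k) * (Om v * r v ^ (2 * k - Suc 0)) = Om v * (real (2 * k) * r v ^ (2 * k - Suc 0) * r v) / r v"
        using rpos[of v] by simp
      also have "\<dots> = Om v * (real (2 * k) * r v ^ (2 * k)) / r v" by (simp only: pow_pred)
      finally show ?thesis .
    qed
    show ?thesis unfolding p_def
    proof (rule DERIV_cong[OF dd])
      show "((\<Sum>i\<in>I. 2 * x i v * ?D i) * r v ^ (2 * k) - (\<Sum>i\<in>I. (x i v)\<^sup>2) * (real (2 * k) * (Om v * r v ^ (2 * k - Suc 0)))) /
          (r v ^ (2 * k) * r v ^ (2 * k)) = 2 * Om v * s v"
        unfolding sum1 pp s_def by (rule alg1) (use rpos[of v] R0 in auto)
    qed
  qed
  have xcont: "continuous_on {v0..} (x i)" if "i \<in> I" for i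
  proof (rule DERIV_continuous_on)
    fix v assume vv: "v \<in> {v0..}"
    show "(x i has_real_derivative (real k * Om v / r v * x i v + Om v * y i v)) (at v within {v0..})"
      using vv by (intro xder[OF that]) simp
  qed
  have rne0: "r v \<noteq> 0" for v using rpos[of v] by linarith
  have rne: "\<forall>v\<in>S. r v ^ (2 * k) \<noteq> 0" for S using rne0 by simp
  have pcont: "continuous_on {v0..} p" unfolding p_def
    by (intro continuous_intros rcont xcont rne) auto
  have qcont: "continuous_on {v0..} q" unfolding q_def
    by (intro continuous_intros rcont ycont rne) auto
  have p0: "p v \<ge> 0" for v unfolding p_def by (intro divide_nonneg_pos sum_nonneg zero_le_power2 zero_less_power rpos)
  have q0: "q v \<ge> 0" for v unfolding q_def by (intro divide_nonneg_pos sum_nonneg zero_le_power2 zero_less_power rpos)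
  have am: "2 * s v \<le> \<epsilon> * p v + q v / \<epsilon>" if e: "\<epsilon> > 0" for \<epsilon> v
  proof -
    have "2 * (\<Sum>i\<in>I. x i v * y i v) = (\<Sum>i\<in>I. 2 * x i v * y i v)" by (simp add: sum_distrib_left mult_ac)
    also have "\<dots> \<le> (\<Sum>i\<in>I. \<epsilon> * (x i v)\<^sup>2 + (y i v)\<^sup>2 / \<epsilon>)" by (intro sum_mono amgm e)
    also have "\<dots> = \<epsilon> * (\<Sum>i\<in>I. (x i v)\<^sup>2) + (\<Sum>i\<in>I. (y i v)\<^sup>2) / \<epsilon>"
      by (simp add: sum.distrib sum_distrib_left sum_divide_distrib)
    finally have "2 * (\<Sum>i\<in>I. x i v * y i v) / r v ^ (2*k) \<le> (\<epsilon> * (\<Sum>i\<in>I. (x i v)\<^sup>2) + (\<Sum>i\<in>I. (y i v)\<^sup>2) / \<epsilon>) / r v ^ (2*k)"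
      using rpos[of v] by (intro divide_right_mono) auto
    moreover have "(\<epsilon> * (\<Sum>i\<in>I. (x i v)\<^sup>2) + (\<Sum>i\<in>I. (y i v)\<^sup>2) / \<epsilon>) / r v ^ (2*k)
       = \<epsilon> * ((\<Sum>i\<in>I. (x i v)\<^sup>2) / r v ^ (2*k)) + ((\<Sum>i\<in>I. (y i v)\<^sup>2) / r v ^ (2*k)) / \<epsilon>"
      by (simp add: add_divide_distrib)
    ultimately show ?thesis unfolding s_def p_def q_def by simp
  qed
  define F where "F = (\<lambda>t. Om t * (r t)\<^sup>2 * q t)"
  have Fcont: "continuous_on {v0..} F" unfolding F_def
    by (intro continuous_intros qcont rcont continuous_on_subset[OF Ocont]) auto
  have Id: "((\<lambda>t. integral {v0..t} g) has_real_derivative g t) (at t within {v0..v1})"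
    if "continuous_on {v0..} g" "t \<in> {v0..v1}" for g t v1
    using integral_has_real_derivative[OF continuous_on_subset[OF that(1)] that(2)] by auto
  have pd': "(p has_real_derivative 2 * Om t * s t) (at t within {v0..v1})" if "t \<in> {v0..v1}" for t v1
    using that by (intro has_field_derivative_subset[OF pd]) auto
  show "p v \<le> r v0 / (r v0 - rp) * p v0 + (1 / rp) * integral {v0..v} (\<lambda>t. Om t * (r t)\<^sup>2 * q t)"
    if v: "v \<ge> v0" for v
  proof -
    define \<Phi> where "\<Phi> = (\<lambda>t. r t / (r t - rp) * p t - (1 / rp) * integral {v0..t} F)"
    define \<Phi>' where "\<Phi>' = (\<lambda>t. ((Om t * (r t - rp) - r t * Om t) / ((r t - rp) * (r t - rp))) * p t
        + r t / (r t - rp) * (2 * Om t * s t) - (1 / rp) * F t)"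
    have "\<Phi> v \<le> \<Phi> v0"
    proof (rule decr[OF v, of _ \<Phi>'])
      fix t assume t: "t \<in> {v0..v}"
      have rr: "r t - rp \<noteq> 0" using rgt[of t] by simp
      have h: "((\<lambda>t. r t / (r t - rp)) has_real_derivative (Om t * (r t - rp) - r t * Om t) / ((r t - rp) * (r t - rp))) (at t within {v0..v})"
        using DERIV_divide[OF rder DERIV_diff[OF rder DERIV_const] rr] by simp
      show "(\<Phi> has_real_derivative \<Phi>' t) (at t within {v0..v})"
        unfolding \<Phi>_def \<Phi>'_def
        by (rule DERIV_diff[OF DERIV_mult'[OF h pd'[OF t]] DERIV_cmult[OF Id[OF Fcont t]], THEN DERIV_cong])
           (simp add: algebra_simps)
    next
      fix t assume "v0 < t" "t < v"
      let ?r = "r t" let ?e = "rp / ((?r - rp) * ?r)"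
      have rr: "?r - rp > 0" using rgt[of t] by simp
      have e: "?e > 0" using rr rp rpos[of t] by simp
      have "r t / (r t - rp) * (2 * s t) \<le> r t / (r t - rp) * (?e * p t + q t / ?e)"
        using am[OF e, of t] rr rpos[of t] by (intro mult_left_mono) auto
      also have "\<dots> = rp / (?r - rp)\<^sup>2 * p t + ?r\<^sup>2 * q t / rp"
        using alg2[of "?r - rp" ?r rp "p t" "q t"] rr rpos[of t] rp by simp
      finally have *: "r t / (r t - rp) * (2 * s t) \<le> rp / (?r - rp)\<^sup>2 * p t + ?r\<^sup>2 * q t / rp" .
      have "\<Phi>' t = Om t * (- (rp / (?r - rp)\<^sup>2 * p t) + r t / (r t - rp) * (2 * s t) - ?r\<^sup>2 * q t / rp)"
        unfolding \<Phi>'_def F_def using rr rp by (simp add: field_simps power2_eq_square)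
      also have "\<dots> \<le> 0" using * Opos[of t] by (intro mult_nonneg_nonpos) auto
      finally show "\<Phi>' t \<le> 0" .
    qed
    hence "r v / (r v - rp) * p v - (1 / rp) * integral {v0..v} F \<le> r v0 / (r v0 - rp) * p v0"
      unfolding \<Phi>_def by simp
    moreover have "p v \<le> r v / (r v - rp) * p v"
    proof -
      have "1 \<le> r v / (r v - rp)" using rgt[of v] rp by (simp add: field_simps)
      from mult_right_mono[OF this p0[of v]] show ?thesis by simp
    qed
    ultimately show ?thesis unfolding F_def by linarith
  qed
  show "integral {v0..v} (\<lambda>t. Om t / (r t)\<^sup>2 * p t)
            \<le> 4 / rp * p v0 + 16 / rp\<^sup>2 * integral {v0..v} (\<lambda>t. Om t * (r t)\<^sup>2 * q t)"
    if v: "v \<ge> v0" for v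
  proof -
    define B where "B = (\<lambda>t. Om t / (r t)\<^sup>2 * p t)"
    have Bcont: "continuous_on {v0..} B" unfolding B_def using rpos
      by (intro continuous_intros pcont rcont continuous_on_subset[OF Ocont]) (auto simp: less_le)
    define \<Psi> where "\<Psi> = (\<lambda>t. (1 + rp / r t) * p t + (rp / 2) * integral {v0..t} B - (8 / rp) * integral {v0..t} F)"
    define \<Psi>' where "\<Psi>' = (\<lambda>t. (- (rp * Om t) / (r t * r t)) * p t + (1 + rp / r t) * (2 * Om t * s t)
        + (rp / 2) * B t - (8 / rp) * F t)"
    have "\<Psi> v \<le> \<Psi> v0"
    proof (rule decr[OF v, of _ \<Psi>'])
      fix t assume t: "t \<in> {v0..v}"
      have rr: "r t \<noteq> 0" using rpos[of t] by simp
      have h: "((\<lambda>t. 1 + rp / r t) has_real_derivative - (rp * Om t) / (r t * r t)) (at t within {v0..v})"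
        using DERIV_add[OF DERIV_const DERIV_divide[OF DERIV_const rder rr]] by simp
      show "(\<Psi> has_real_derivative \<Psi>' t) (at t within {v0..v})"
        unfolding \<Psi>_def \<Psi>'_def
        by (rule DERIV_diff[OF DERIV_add[OF DERIV_mult'[OF h pd'[OF t]] DERIV_cmult[OF Id[OF Bcont t]]]
                  DERIV_cmult[OF Id[OF Fcont t]], THEN DERIV_cong])
           (simp add: algebra_simps)
    next
      fix t assume "v0 < t" "t < v"
      let ?r = "r t" let ?H = "1 + rp / ?r" let ?e = "rp / (2 * ?r\<^sup>2 * ?H)"
      have rr: "?r > 0" using rpos[of t] by simp
      have H: "?H > 0" "?H \<le> 2" using rr rgt[of t] rp by (auto simp: field_simps)
      have e: "?e > 0" using rr rp H by simp
      have "?H * (2 * s t) \<le> ?H * (?e * p t + q t / ?e)"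
        using am[OF e, of t] H by (intro mult_left_mono) auto
      also have "\<dots> = rp / (2 * ?r\<^sup>2) * p t + 2 * ?H * ?H * ?r\<^sup>2 * q t / rp"
        using alg3[of ?H ?r rp "p t" "q t"] rr H rp by simp
      also have "\<dots> \<le> rp / (2 * ?r\<^sup>2) * p t + 8 * ?r\<^sup>2 * q t / rp"
      proof -
        have "?H * ?H \<le> 2 * 2" using H by (intro mult_mono) auto
        hence "2 * (?H * ?H) \<le> 8" by linarith
        hence h8: "2 * ?H * ?H \<le> 8" by (simp only: mult.assoc)
        have nn: "0 \<le> ?r\<^sup>2 * q t / rp" using q0[of t] rp by simp
        have "2 * ?H * ?H * (?r\<^sup>2 * q t / rp) \<le> 8 * (?r\<^sup>2 * q t / rp)"
          by (rule mult_right_mono[OF h8 nn])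
        thus ?thesis by simp
      qed
      finally have *: "?H * (2 * s t) \<le> rp / (2 * ?r\<^sup>2) * p t + 8 * ?r\<^sup>2 * q t / rp" .
      have "\<Psi>' t = Om t * (- (rp / (2 * ?r\<^sup>2) * p t) + ?H * (2 * s t) - 8 * ?r\<^sup>2 * q t / rp)"
        unfolding \<Psi>'_def F_def B_def using rr rp by (simp add: field_simps power2_eq_square)
      also have "\<dots> \<le> 0" using * Opos[of t] by (intro mult_nonneg_nonpos) auto
      finally show "\<Psi>' t \<le> 0" .
    qed
    hence "(1 + rp / r v) * p v + (rp / 2) * integral {v0..v} B - (8 / rp) * integral {v0..v} F
       \<le> (1 + rp / r v0) * p v0" unfolding \<Psi>_def by simp
    moreover have "(1 + rp / r v) * p v \<ge> 0" using p0[of v] rpos[of v] rp by simp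
    moreover have "(1 + rp / r v0) * p v0 \<le> 2 * p v0"
    proof -
      have "1 + rp / r v0 \<le> 2" using rgt[of v0] rp by (simp add: field_simps)
      thus ?thesis using p0[of v0] by (intro mult_right_mono) auto
    qed
    ultimately have "(rp / 2) * integral {v0..v} B \<le> 2 * p v0 + (8 / rp) * integral {v0..v} F" by linarith
    hence "(2 / rp) * ((rp / 2) * integral {v0..v} B) \<le> (2 / rp) * (2 * p v0 + (8 / rp) * integral {v0..v} F)"
      using rp by (intro mult_left_mono) auto
    thus ?thesis unfolding B_def F_def using rp by (simp add: field_simps power2_eq_square)
  qed
qed

lemma sph_comp: "sph \<theta> \<phi> $ 1 = sin \<theta> * cos \<phi>" "sph \<theta> \<phi> $ 2 = sin \<theta> * sin \<phi>" "sph \<theta> \<phi> $ 3 = cos \<theta>"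
  unfolding sph_def by simp_all

lemma sph_cont: "continuous_on UNIV (\<lambda>z::real\<times>real. sph (fst z) (snd z))"
proof -
  have e: "(\<lambda>z::real\<times>real. sph (fst z) (snd z)) = (\<lambda>z. \<chi> i. sph (fst z) (snd z) $ i)" by simp
  show ?thesis unfolding e
  proof (intro continuous_on_vec_lambda)
    fix i :: 3
    have "i = 1 \<or> i = 2 \<or> i = 3" by (rule exhaust_3)
    thus "continuous_on UNIV (\<lambda>z::real\<times>real. sph (fst z) (snd z) $ i)"
      by (elim disjE) (simp_all add: sph_comp, (intro continuous_intros)+)
  qed
qed

lemma sph_sphere: "sph \<theta> \<phi> \<in> sphere 0 1"
proof -
  have "(sin \<theta> * cos \<phi>)\<^sup>2 + (sin \<theta> * sin \<phi>)\<^sup>2 + (cos \<theta>)\<^sup>2 = (sin \<theta>)\<^sup>2 * ((sin \<phi>)\<^sup>2 + (cos \<phi>)\<^sup>2) + (cos \<theta>)\<^sup>2"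
    by algebra
  also have "\<dots> = (sin \<theta>)\<^sup>2 + (cos \<theta>)\<^sup>2" by (simp only: sin_cos_squared_add mult_1_right)
  also have "\<dots> = 1" by simp
  finally have c: "(sin \<theta> * cos \<phi>)\<^sup>2 + (sin \<theta> * sin \<phi>)\<^sup>2 + (cos \<theta>)\<^sup>2 = 1" .
  have "norm (sph \<theta> \<phi>) = sqrt ((sin \<theta> * cos \<phi>)\<^sup>2 + (sin \<theta> * sin \<phi>)\<^sup>2 + (cos \<theta>)\<^sup>2)"
    unfolding norm_vec_def L2_set_def sum_3 sph_comp by simp
  thus ?thesis using c by simp
qed

lemma lb2: "(lborel \<Otimes>\<^sub>M lborel :: (real \<times> real) measure) = lborel" by (rule lborel_prod)
lemma lb3: "((lborel \<Otimes>\<^sub>M lborel) \<Otimes>\<^sub>M lborel :: ((real \<times> real) \<times> real) measure) = lborel"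
  by (simp add: lborel_prod)

lemma meas_comp:
  fixes K :: "real \<times> real \<times> real \<Rightarrow> ennreal" and m :: "'a::topological_space \<Rightarrow> real \<times> real \<times> real"
  assumes "K \<in> borel_measurable borel" "continuous_on UNIV m"
  shows "(\<lambda>x. K (m x)) \<in> borel_measurable borel"
  using measurable_compose[OF borel_measurable_continuous_onI[OF assms(2)] assms(1)] by (simp add: comp_def)

definition K3 :: "(real \<Rightarrow> real \<Rightarrow> real \<Rightarrow> ennreal) \<Rightarrow> real \<times> real \<times> real \<Rightarrow> ennreal" where
  "K3 K z = K (fst z) (fst (snd z)) (snd (snd z))"

lemma tonelli3:
  fixes K :: "real \<Rightarrow> real \<Rightarrow> real \<Rightarrow> ennreal"
  assumes m: "K3 K \<in> borel_measurable borel"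
  shows "(\<integral>\<^sup>+v. (\<integral>\<^sup>+\<theta>. (\<integral>\<^sup>+\<phi>. K v \<theta> \<phi> \<partial>lborel) \<partial>lborel) \<partial>lborel)
       = (\<integral>\<^sup>+\<theta>. (\<integral>\<^sup>+\<phi>. (\<integral>\<^sup>+v. K v \<theta> \<phi> \<partial>lborel) \<partial>lborel) \<partial>lborel)"
proof -
  have m1: "(\<lambda>x. K (fst (fst x)) (snd (fst x)) (snd x)) \<in> borel_measurable borel"
    using meas_comp[OF m, of "\<lambda>x::(real\<times>real)\<times>real. (fst (fst x), snd (fst x), snd x)"]
    unfolding K3_def by (simp add: continuous_on_Pair continuous_on_fst continuous_on_snd continuous_on_id)
  have m1': "case_prod (\<lambda>x y. K (fst x) (snd x) y) \<in> borel_measurable ((lborel \<Otimes>\<^sub>M lborel) \<Otimes>\<^sub>M lborel)"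
    unfolding lb3 using m1 by (simp add: case_prod_beta')
  have G: "(\<lambda>x. \<integral>\<^sup>+\<phi>. K (fst x) (snd x) \<phi> \<partial>lborel) \<in> borel_measurable (lborel \<Otimes>\<^sub>M lborel)"
    by (rule lborel.borel_measurable_nn_integral[OF m1'])
  have G': "case_prod (\<lambda>v \<theta>. \<integral>\<^sup>+\<phi>. K v \<theta> \<phi> \<partial>lborel) \<in> borel_measurable (lborel \<Otimes>\<^sub>M lborel)"
    using G by (simp add: case_prod_beta')
  have s1: "(\<integral>\<^sup>+\<theta>. (\<integral>\<^sup>+v. (\<integral>\<^sup>+\<phi>. K v \<theta> \<phi> \<partial>lborel) \<partial>lborel) \<partial>lborel)
      = (\<integral>\<^sup>+v. (\<integral>\<^sup>+\<theta>. (\<integral>\<^sup>+\<phi>. K v \<theta> \<phi> \<partial>lborel) \<partial>lborel) \<partial>lborel)"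
    by (rule lborel_pair.Fubini'[OF G'])
  have s2: "(\<integral>\<^sup>+v. (\<integral>\<^sup>+\<phi>. K v \<theta> \<phi> \<partial>lborel) \<partial>lborel) = (\<integral>\<^sup>+\<phi>. (\<integral>\<^sup>+v. K v \<theta> \<phi> \<partial>lborel) \<partial>lborel)" for \<theta>
  proof -
    have "(\<lambda>x::real\<times>real. K (fst x) \<theta> (snd x)) \<in> borel_measurable borel"
      using meas_comp[OF m, of "\<lambda>x::real\<times>real. (fst x, \<theta>, snd x)"]
      unfolding K3_def by (simp add: continuous_on_Pair continuous_on_fst continuous_on_snd continuous_on_id continuous_on_const)
    hence "case_prod (\<lambda>v \<phi>. K v \<theta> \<phi>) \<in> borel_measurable (lborel \<Otimes>\<^sub>M lborel)"
      unfolding lb2 by (simp add: case_prod_beta')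
    from lborel_pair.Fubini'[OF this] show ?thesis by simp
  qed
  show ?thesis unfolding s1[symmetric] s2 ..
qed

lemma meas_int:
  fixes K :: "real \<Rightarrow> real \<Rightarrow> real \<Rightarrow> ennreal"
  assumes m: "K3 K \<in> borel_measurable borel"
  shows "(\<lambda>z::real\<times>real. \<integral>\<^sup>+v. K v (fst z) (snd z) \<partial>lborel) \<in> borel_measurable borel"
proof -
  have "(\<lambda>x::(real\<times>real)\<times>real. K (snd x) (fst (fst x)) (snd (fst x))) \<in> borel_measurable borel"
    using meas_comp[OF m, of "\<lambda>x::(real\<times>real)\<times>real. (snd x, fst (fst x), snd (fst x))"]
    unfolding K3_def by (simp add: continuous_on_Pair continuous_on_fst continuous_on_snd continuous_on_id)
  hence "case_prod (\<lambda>x v. K v (fst x) (snd x)) \<in> borel_measurable ((lborel \<Otimes>\<^sub>M lborel) \<Otimes>\<^sub>M lborel)"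
    unfolding lb3 by (simp add: case_prod_beta')
  from lborel.borel_measurable_nn_integral[OF this] show ?thesis unfolding lb2 by simp
qed

lemma meas_slice:
  fixes K :: "real \<Rightarrow> real \<Rightarrow> real \<Rightarrow> ennreal"
  assumes m: "K3 K \<in> borel_measurable borel"
  shows "(\<lambda>v. K v \<theta> \<phi>) \<in> borel_measurable borel"
    and "(\<lambda>z::real\<times>real. K v (fst z) (snd z)) \<in> borel_measurable borel"
proof -
  show "(\<lambda>v. K v \<theta> \<phi>) \<in> borel_measurable borel"
    using meas_comp[OF m, of "\<lambda>v::real. (v, \<theta>, \<phi>)"]
    unfolding K3_def by (simp add: continuous_on_Pair continuous_on_id continuous_on_const)
  show "(\<lambda>z::real\<times>real. K v (fst z) (snd z)) \<in> borel_measurable borel"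
    using meas_comp[OF m, of "\<lambda>z::real\<times>real. (v, fst z, snd z)"]
    unfolding K3_def by (simp add: continuous_on_Pair continuous_on_fst continuous_on_snd continuous_on_const)
qed

definition W :: "real \<Rightarrow> real \<Rightarrow> ennreal" where
  "W \<theta> \<phi> = ennreal (sin \<theta>) * indicator {0..2*pi} \<phi> * indicator {0..pi} \<theta>"

lemma sph_int_eq: "sph_int f = (\<integral>\<^sup>+\<theta>. (\<integral>\<^sup>+\<phi>. f (sph \<theta> \<phi>) * W \<theta> \<phi> \<partial>lborel) \<partial>lborel)"
  unfolding sph_int_def
proof (rule nn_integral_cong)
  fix \<theta> :: real
  show "(\<integral>\<^sup>+\<phi>. f (sph \<theta> \<phi>) * ennreal (sin \<theta>) * indicator {0..2 * pi} \<phi> \<partial>lborel) * indicator {0..pi} \<theta>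
      = (\<integral>\<^sup>+\<phi>. f (sph \<theta> \<phi>) * W \<theta> \<phi> \<partial>lborel)"
    by (cases "\<theta> \<in> {0..pi}") (simp_all add: W_def mult.assoc)
qed

lemma W_meas: "(\<lambda>z::real\<times>real. W (fst z) (snd z)) \<in> borel_measurable borel"
proof -
  have s: "(\<lambda>z::real\<times>real. ennreal (sin (fst z))) \<in> borel_measurable borel"
    using measurable_compose[OF borel_measurable_continuous_onI measurable_ennreal, of "\<lambda>z::real\<times>real. sin (fst z)"]
    by (simp add: comp_def continuous_on_sin continuous_on_fst continuous_on_id)
  have i1: "(\<lambda>z::real\<times>real. indicator {0..2*pi} (snd z) :: ennreal) \<in> borel_measurable borel"
    using measurable_compose[OF borel_measurable_continuous_onI borel_measurable_indicator, of snd "{0..2*pi}"]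
    by (simp add: comp_def continuous_on_snd continuous_on_id)
  have i2: "(\<lambda>z::real\<times>real. indicator {0..pi} (fst z) :: ennreal) \<in> borel_measurable borel"
    using measurable_compose[OF borel_measurable_continuous_onI borel_measurable_indicator, of fst "{0..pi}"]
    by (simp add: comp_def continuous_on_fst continuous_on_id)
  show ?thesis unfolding W_def using s i1 i2 by measurable
qed

definition sph_meas :: "(real^3 \<Rightarrow> ennreal) \<Rightarrow> bool" where
  "sph_meas f \<longleftrightarrow> (\<lambda>z::real\<times>real. f (sph (fst z) (snd z))) \<in> borel_measurable borel"

lemma sph_meas_W:
  assumes "sph_meas f"
  shows "case_prod (\<lambda>\<theta> \<phi>. f (sph \<theta> \<phi>) * W \<theta> \<phi>) \<in> borel_measurable (lborel \<Otimes>\<^sub>M lborel)"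
    and "(\<lambda>\<phi>. f (sph \<theta> \<phi>) * W \<theta> \<phi>) \<in> borel_measurable lborel"
    and "(\<lambda>\<theta>. \<integral>\<^sup>+\<phi>. f (sph \<theta> \<phi>) * W \<theta> \<phi> \<partial>lborel) \<in> borel_measurable lborel"
proof -
  have m: "(\<lambda>z::real\<times>real. f (sph (fst z) (snd z)) * W (fst z) (snd z)) \<in> borel_measurable borel"
    using assms W_meas unfolding sph_meas_def by measurable
  thus m2: "case_prod (\<lambda>\<theta> \<phi>. f (sph \<theta> \<phi>) * W \<theta> \<phi>) \<in> borel_measurable (lborel \<Otimes>\<^sub>M lborel)"
    unfolding lb2 by (simp add: case_prod_beta')
  show "(\<lambda>\<phi>. f (sph \<theta> \<phi>) * W \<theta> \<phi>) \<in> borel_measurable lborel"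
    using measurable_compose[OF borel_measurable_continuous_onI m, of "\<lambda>\<phi>::real. (\<theta>, \<phi>)"]
    by (simp add: comp_def continuous_on_Pair continuous_on_const continuous_on_id)
  show "(\<lambda>\<theta>. \<integral>\<^sup>+\<phi>. f (sph \<theta> \<phi>) * W \<theta> \<phi> \<partial>lborel) \<in> borel_measurable lborel"
    using lborel.borel_measurable_nn_integral[OF m2] by simp
qed

lemma sph_int_add:
  assumes "sph_meas f" "sph_meas g"
  shows "sph_int (\<lambda>\<omega>. f \<omega> + g \<omega>) = sph_int f + sph_int g"
proof -
  have "sph_int (\<lambda>\<omega>. f \<omega> + g \<omega>) = (\<integral>\<^sup>+\<theta>. (\<integral>\<^sup>+\<phi>. f (sph \<theta> \<phi>) * W \<theta> \<phi> \<partial>lborel) + (\<integral>\<^sup>+\<phi>. g (sph \<theta> \<phi>) * W \<theta> \<phi> \<partial>lborel) \<partial>lborel)"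
    unfolding sph_int_eq distrib_right
    by (intro nn_integral_cong nn_integral_add sph_meas_W(2) assms)
  also have "\<dots> = sph_int f + sph_int g"
    unfolding sph_int_eq by (intro nn_integral_add sph_meas_W(3) assms)
  finally show ?thesis .
qed

lemma sph_int_cmult:
  assumes "sph_meas f"
  shows "sph_int (\<lambda>\<omega>. c * f \<omega>) = c * sph_int f"
proof -
  have "sph_int (\<lambda>\<omega>. c * f \<omega>) = (\<integral>\<^sup>+\<theta>. c * (\<integral>\<^sup>+\<phi>. f (sph \<theta> \<phi>) * W \<theta> \<phi> \<partial>lborel) \<partial>lborel)"
    unfolding sph_int_eq mult.assoc
    by (intro nn_integral_cong nn_integral_cmult sph_meas_W(2) assms)
  also have "\<dots> = c * sph_int f"
    unfolding sph_int_eq by (intro nn_integral_cmult sph_meas_W(3) assms)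
  finally show ?thesis .
qed

lemma sph_int_mono:
  assumes "\<And>\<omega>. \<omega> \<in> sphere 0 1 \<Longrightarrow> f \<omega> \<le> g \<omega>"
  shows "sph_int f \<le> sph_int g"
  unfolding sph_int_eq
  by (intro nn_integral_mono mult_right_mono assms sph_sphere) simp

lemma sph_swap:
  fixes A :: "real \<Rightarrow> real^3 \<Rightarrow> ennreal"
  assumes m: "K3 (\<lambda>v \<theta> \<phi>. A v (sph \<theta> \<phi>) * indicator {a..} v) \<in> borel_measurable borel"
  shows "(\<integral>\<^sup>+v. sph_int (A v) * indicator {a..} v \<partial>lborel) = sph_int (\<lambda>\<omega>. \<integral>\<^sup>+v. A v \<omega> * indicator {a..} v \<partial>lborel)"
proof -
  define K where "K = (\<lambda>v \<theta> \<phi>. A v (sph \<theta> \<phi>) * indicator {a..} v * W \<theta> \<phi>)"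
  have Km: "K3 K \<in> borel_measurable borel"
  proof -
    have w: "(\<lambda>z::real\<times>real\<times>real. W (fst (snd z)) (snd (snd z))) \<in> borel_measurable borel"
      using measurable_compose[OF borel_measurable_continuous_onI W_meas, of "\<lambda>z::real\<times>real\<times>real. snd z"]
      by (simp add: comp_def continuous_on_snd continuous_on_id)
    show ?thesis using m w unfolding K3_def K_def by measurable
  qed
  have "(\<integral>\<^sup>+v. sph_int (A v) * indicator {a..} v \<partial>lborel) = (\<integral>\<^sup>+v. (\<integral>\<^sup>+\<theta>. (\<integral>\<^sup>+\<phi>. K v \<theta> \<phi> \<partial>lborel) \<partial>lborel) \<partial>lborel)"
  proof (rule nn_integral_cong)
    fix v :: real
    show "sph_int (A v) * indicator {a..} v = (\<integral>\<^sup>+\<theta>. (\<integral>\<^sup>+\<phi>. K v \<theta> \<phi> \<partial>lborel) \<partial>lborel)"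
      unfolding sph_int_eq K_def by (cases "v \<in> {a..}") simp_all
  qed
  also have "\<dots> = (\<integral>\<^sup>+\<theta>. (\<integral>\<^sup>+\<phi>. (\<integral>\<^sup>+v. K v \<theta> \<phi> \<partial>lborel) \<partial>lborel) \<partial>lborel)"
    by (rule tonelli3[OF Km])
  also have "\<dots> = sph_int (\<lambda>\<omega>. \<integral>\<^sup>+v. A v \<omega> * indicator {a..} v \<partial>lborel)"
    unfolding sph_int_eq
  proof (intro nn_integral_cong)
    fix \<theta> \<phi> :: real
    have "(\<lambda>v. A v (sph \<theta> \<phi>) * indicator {a..} v) \<in> borel_measurable borel"
      using meas_slice(1)[OF m, of \<theta> \<phi>] by simp
    thus "(\<integral>\<^sup>+v. K v \<theta> \<phi> \<partial>lborel) = (\<integral>\<^sup>+v. A v (sph \<theta> \<phi>) * indicator {a..} v \<partial>lborel) * W \<theta> \<phi>"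
      unfolding K_def by (intro nn_integral_multc) simp
  qed
  finally show ?thesis .
qed

lemma E1:
  fixes g :: "real \<Rightarrow> real"
  assumes "continuous_on {a..b} g" "\<And>x. x \<in> {a..b} \<Longrightarrow> g x \<ge> 0"
  shows "(\<integral>\<^sup>+x. ennreal (g x) * indicator {a..b} x \<partial>lborel) = ennreal (integral {a..b} g)"
proof -
  have i: "(g has_integral integral {a..b} g) {a..b}"
    using integrable_continuous_real[OF assms(1)] by (simp add: has_integral_integral)
  have "(\<integral>\<^sup>+x. ennreal (g x) * indicator {a..b} x \<partial>lborel) = (\<integral>\<^sup>+x. ennreal (indicator {a..b} x * g x) \<partial>lborel)"
    by (intro nn_integral_cong) (auto simp: indicator_def)
  also have "\<dots> = ennreal (integral {a..b} g)"
    by (rule nn_integral_has_integral_lebesgue[OF assms(2) i])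
  finally show ?thesis .
qed

lemma E_meas:
  fixes g :: "real \<Rightarrow> real"
  assumes "continuous_on S g" "S \<in> sets borel"
  shows "(\<lambda>x. ennreal (g x) * indicator S x) \<in> borel_measurable borel"
proof -
  have "(\<lambda>x. indicator S x *\<^sub>R g x) \<in> borel_measurable borel"
    by (rule borel_measurable_continuous_on_indicator[OF assms(2,1)])
  hence "(\<lambda>x. ennreal (indicator S x *\<^sub>R g x)) \<in> borel_measurable borel" by measurable
  moreover have "(\<lambda>x. ennreal (indicator S x *\<^sub>R g x)) = (\<lambda>x. ennreal (g x) * indicator S x)"
    by (auto simp: indicator_def)
  ultimately show ?thesis by simp
qed

lemma tail_le:
  fixes g :: "real \<Rightarrow> real"
  assumes c: "continuous_on {a..} g" and nn: "\<And>x. x \<ge> a \<Longrightarrow> g x \<ge> 0"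
    and B: "\<And>b. b \<ge> a \<Longrightarrow> ennreal (integral {a..b} g) \<le> B"
  shows "(\<integral>\<^sup>+x. ennreal (g x) * indicator {a..} x \<partial>lborel) \<le> B"
proof -
  define f where "f = (\<lambda>(n::nat) x. ennreal (g x) * indicator {a..a + real n} x)"
  have inc: "incseq f" unfolding f_def incseq_def le_fun_def
    by (auto intro!: mult_left_mono simp: indicator_def)
  have fm: "f n \<in> borel_measurable lborel" for n
    unfolding f_def using E_meas[OF continuous_on_subset[OF c], of "{a..a + real n}"] by auto
  have sup: "(SUP n. f n x) = ennreal (g x) * indicator {a..} x" for x
  proof (cases "x \<ge> a")
    case True
    obtain n :: nat where n: "x - a \<le> real n" using real_arch_simple by blast
    show ?thesis
    proof (rule antisym)
      show "(SUP n. f n x) \<le> ennreal (g x) * indicator {a..} x"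
        unfolding f_def using True by (intro SUP_least) (auto simp: indicator_def)
      have "f n x = ennreal (g x) * indicator {a..} x" unfolding f_def using True n by (auto simp: indicator_def)
      thus "ennreal (g x) * indicator {a..} x \<le> (SUP n. f n x)" by (metis SUP_upper UNIV_I)
    qed
  next
    case False thus ?thesis unfolding f_def by (simp add: indicator_def)
  qed
  have "(\<integral>\<^sup>+x. ennreal (g x) * indicator {a..} x \<partial>lborel) = (SUP n. integral\<^sup>N lborel (f n))"
    unfolding sup[symmetric] by (rule nn_integral_monotone_convergence_SUP[OF inc fm])
  also have "\<dots> \<le> B"
  proof (rule SUP_least)
    fix n
    have "integral\<^sup>N lborel (f n) = ennreal (integral {a..a + real n} g)"
      unfolding f_def by (rule E1) (auto intro: continuous_on_subset[OF c] nn)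
    also have "\<dots> \<le> B" by (rule B) simp
    finally show "integral\<^sup>N lborel (f n) \<le> B" .
  qed
  finally show ?thesis .
qed

lemma part_le:
  fixes g :: "real \<Rightarrow> real"
  assumes c: "continuous_on {a..} g" and nn: "\<And>x. x \<ge> a \<Longrightarrow> g x \<ge> 0" and b: "b \<ge> a"
  shows "ennreal (integral {a..b} g) \<le> (\<integral>\<^sup>+x. ennreal (g x) * indicator {a..} x \<partial>lborel)"
proof -
  have "ennreal (integral {a..b} g) = (\<integral>\<^sup>+x. ennreal (g x) * indicator {a..b} x \<partial>lborel)"
    by (rule E1[symmetric]) (auto intro: continuous_on_subset[OF c] nn)
  also have "\<dots> \<le> (\<integral>\<^sup>+x. ennreal (g x) * indicator {a..} x \<partial>lborel)"
    by (intro nn_integral_mono mult_left_mono) (auto simp: indicator_def)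
  finally show ?thesis .
qed

lemma idx_finite: "finite (idx k)"
  unfolding idx_def by (rule finite_list_length)

lemma field_smooth:
  assumes "S2_tensor_field k u0 v0 \<xi>" "is \<in> idx k"
  obtains S f where "open S" "continuous_on S f" "region u0 v0 \<subseteq> S"
    "\<And>u v \<omega>. (u, v, \<omega>) \<in> region u0 v0 \<Longrightarrow> f (u, v, \<omega>) = \<xi> u v \<omega> is"
    "\<And>d x. d \<in> Basis \<Longrightarrow> x \<in> S \<Longrightarrow> (\<lambda>t. f (x + t *\<^sub>R d)) differentiable (at 0)"
proof -
  from assms obtain S f where sm: "smooth_on_open S f" and sub: "region u0 v0 \<subseteq> S"
    and eq: "\<forall>(u, v, \<omega>)\<in>region u0 v0. f (u, v, \<omega>) = \<xi> u v \<omega> is"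
    unfolding S2_tensor_field_def by blast
  have "continuous_on S (pderivs [] f)" "\<forall>d\<in>Basis. \<forall>x\<in>S. (\<lambda>t. pderivs [] f (x + t *\<^sub>R d)) differentiable (at 0)"
    using sm unfolding smooth_on_open_def by (metis empty_set empty_subsetI)+
  moreover have "open S" using sm unfolding smooth_on_open_def by blast
  moreover have "\<And>u v \<omega>. (u, v, \<omega>) \<in> region u0 v0 \<Longrightarrow> f (u, v, \<omega>) = \<xi> u v \<omega> is"
    using eq by fast
  ultimately show ?thesis using that[of S f] sub by simp
qed

lemma field_cont:
  assumes "S2_tensor_field k u0 v0 \<xi>" "is \<in> idx k" "continuous_on T c" "\<And>z. z \<in> T \<Longrightarrow> c z \<in> region u0 v0"
  shows "continuous_on T (\<lambda>z. \<xi> (fst (c z)) (fst (snd (c z))) (snd (snd (c z))) is)"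
proof -
  obtain S f where S: "continuous_on S f" "region u0 v0 \<subseteq> S"
    "\<And>u v \<omega>. (u, v, \<omega>) \<in> region u0 v0 \<Longrightarrow> f (u, v, \<omega>) = \<xi> u v \<omega> is"
    using field_smooth[OF assms(1,2)] by metis
  have "continuous_on T (\<lambda>z. f (c z))"
    by (rule continuous_on_compose2[OF S(1) assms(3)]) (use assms(4) S(2) in auto)
  moreover have "\<And>z. z \<in> T \<Longrightarrow> f (c z) = \<xi> (fst (c z)) (fst (snd (c z))) (snd (snd (c z))) is"
    using S(3) assms(4) by (metis prod.collapse)
  ultimately show ?thesis using continuous_on_cong by fastforce
qed

lemma field_diff:
  assumes "S2_tensor_field k u0 v0 \<xi>" "is \<in> idx k" "u \<ge> u0" "v \<ge> v0" "\<omega> \<in> sphere 0 1"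
  shows "(\<lambda>v'. \<xi> u v' \<omega> is) differentiable (at v within {v0..})"
proof -
  obtain S f where S: "region u0 v0 \<subseteq> S"
    "\<And>u v \<omega>. (u, v, \<omega>) \<in> region u0 v0 \<Longrightarrow> f (u, v, \<omega>) = \<xi> u v \<omega> is"
    "\<And>d x. d \<in> Basis \<Longrightarrow> x \<in> S \<Longrightarrow> (\<lambda>t. f (x + t *\<^sub>R d)) differentiable (at 0)"
    using field_smooth[OF assms(1,2)] by metis
  have reg: "(u, v, \<omega>) \<in> region u0 v0" using assms unfolding region_def by simp
  have B: "(0::real, 1::real, 0::real^3) \<in> Basis" by (simp add: Basis_prod_def)
  have "(\<lambda>t. f ((u, v, \<omega>) + t *\<^sub>R (0, 1, 0))) differentiable (at 0)"
    using S(3)[OF B] S(1) reg by auto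
  hence "(\<lambda>t. f (u, t + v, \<omega>)) differentiable (at 0)" by (simp add: add.commute)
  then obtain D where "((\<lambda>t. f (u, t + v, \<omega>)) has_real_derivative D) (at 0)"
    using DERIV_deriv_iff_real_differentiable by blast
  hence "((\<lambda>t. f (u, t, \<omega>)) has_real_derivative D) (at (0 + v))"
    using DERIV_shift[of "\<lambda>t. f (u, t, \<omega>)" D 0 v] by simp
  hence "((\<lambda>t. f (u, t, \<omega>)) has_real_derivative D) (at v within {v0..})"
    by (simp add: has_field_derivative_at_within)
  hence "((\<lambda>t. \<xi> u t \<omega> is) has_real_derivative D) (at v within {v0..})"
  proof (rule has_field_derivative_transform_within[where d=1])
    fix x assume "x \<in> {v0..}"
    thus "f (u, x, \<omega>) = \<xi> u x \<omega> is" using S(2) assms unfolding region_def by simp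
  qed (use assms in auto)
  thus ?thesis using differentiableI has_field_derivative_imp_has_derivative by blast
qed

lemma pn_cont:
  assumes M: "M > 0" and QM: "\<bar>Q\<bar> \<le> M" and T: "is_tortoise M Q rs"
    and Z: "S2_tensor_field k u0 v0 Z" and cv: "continuous_on T vv" and cw: "continuous_on T ww"
    and reg: "\<And>z. z \<in> T \<Longrightarrow> (u, vv z, ww z) \<in> region u0 v0"
  shows "continuous_on T (\<lambda>z. pnorm2 M Q rs k Z u (vv z) (ww z))"
    and "continuous_on T (\<lambda>z. Om2uv M Q rs u (vv z) * (rad M Q rs u (vv z))\<^sup>2 * pnorm2 M Q rs k Z u (vv z) (ww z))"
    and "continuous_on T (\<lambda>z. Om2uv M Q rs u (vv z) / (rad M Q rs u (vv z))\<^sup>2 * pnorm2 M Q rs k Z u (vv z) (ww z))"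
proof -
  have rc: "continuous_on T (\<lambda>z. rad M Q rs u (vv z))"
    by (rule continuous_on_compose2[OF rad_cont[OF M QM T] cv]) auto
  have oc: "continuous_on T (\<lambda>z. Om2uv M Q rs u (vv z))"
    by (rule continuous_on_compose2[OF Om2uv_cont[OF M QM T] cv]) auto
  have rpos: "rad M Q rs u v > 0" for v using rad_gt[OF M QM T, of u v] rplus_pos[OF M QM] M
    by linarith
  have ci: "continuous_on T (\<lambda>z. Z u (vv z) (ww z) js)" if "js \<in> idx k" for js
  proof -
    have "continuous_on T (\<lambda>z. Z (fst (u, vv z, ww z)) (fst (snd (u, vv z, ww z))) (snd (snd (u, vv z, ww z))) js)"
      by (rule field_cont[OF Z that continuous_on_Pair[OF continuous_on_const continuous_on_Pair[OF cv cw]] reg])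
    thus ?thesis by simp
  qed
  have nz: "\<forall>z\<in>T. rad M Q rs u (vv z) ^ (2 * k) \<noteq> 0" "\<forall>z\<in>T. (rad M Q rs u (vv z))\<^sup>2 \<noteq> 0"
    using rpos by (simp_all add: less_imp_neq[symmetric] less_imp_neq)
  have sc: "continuous_on T (\<lambda>z. \<Sum>js\<in>idx k. (Z u (vv z) (ww z) js)\<^sup>2)"
    by (intro continuous_on_sum continuous_on_power ci)
  show c1: "continuous_on T (\<lambda>z. pnorm2 M Q rs k Z u (vv z) (ww z))"
    unfolding pnorm2_def gnorm2_def
    by (rule continuous_on_divide[OF sc continuous_on_power[OF rc] nz(1)])
  show "continuous_on T (\<lambda>z. Om2uv M Q rs u (vv z) * (rad M Q rs u (vv z))\<^sup>2 * pnorm2 M Q rs k Z u (vv z) (ww z))"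
    by (intro continuous_on_mult continuous_on_power c1 rc oc)
  show "continuous_on T (\<lambda>z. Om2uv M Q rs u (vv z) / (rad M Q rs u (vv z))\<^sup>2 * pnorm2 M Q rs k Z u (vv z) (ww z))"
    by (intro continuous_on_mult continuous_on_divide continuous_on_power c1 rc oc nz(2))
qed

lemma pn_nonneg: "pnorm2 M Q rs k Z u v \<omega> \<ge> 0"
  unfolding pnorm2_def gnorm2_def
  by (intro divide_nonneg_nonneg sum_nonneg zero_le_power2) (simp add: power_mult zero_le_even_power)

lemma E_meas3:
  fixes G :: "real \<times> real \<times> real \<Rightarrow> real"
  assumes "continuous_on {z. a \<le> fst z} G"
  shows "(\<lambda>z. ennreal (G z) * indicator {a..} (fst z)) \<in> borel_measurable borel"
proof -
  have cl: "closed {z::real \<times> real \<times> real. a \<le> fst z}"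
    by (intro closed_Collect_le continuous_on_const continuous_on_fst continuous_on_id)
  have "(\<lambda>z. indicator {z. a \<le> fst z} z *\<^sub>R G z) \<in> borel_measurable borel"
    by (rule borel_measurable_continuous_on_indicator[OF borel_closed[OF cl] assms])
  hence "(\<lambda>z. ennreal (indicator {z. a \<le> fst z} z *\<^sub>R G z)) \<in> borel_measurable borel" by measurable
  moreover have "(\<lambda>z. ennreal (indicator {z. a \<le> fst z} z *\<^sub>R G z)) = (\<lambda>z. ennreal (G z) * indicator {a..} (fst z))"
    by (auto simp: indicator_def)
  ultimately show ?thesis by simp
qed

lemma sph_meas_cmult: "sph_meas f \<Longrightarrow> sph_meas (\<lambda>\<omega>. c * f \<omega>)"
  unfolding sph_meas_def by measurable

lemma sph_meas_cont: "continuous_on UNIV (\<lambda>z::real\<times>real. g (sph (fst z) (snd z))) \<Longrightarrow> sph_meas (\<lambda>\<omega>. ennreal (g \<omega>))"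
  unfolding sph_meas_def
  using measurable_compose[OF borel_measurable_continuous_onI measurable_ennreal, of "\<lambda>z::real\<times>real. g (sph (fst z) (snd z))"]
  by (simp add: comp_def)

lemma ennreal_lin:
  fixes a b c d :: real
  assumes "0 \<le> a" "0 \<le> b" "0 \<le> c" "0 \<le> d"
  shows "ennreal (a * b + c * d) = ennreal a * ennreal b + ennreal c * ennreal d"
proof -
  have "ennreal (a * b + c * d) = ennreal (a * b) + ennreal (c * d)"
    by (rule ennreal_plus) (use assms in auto)
  also have "\<dots> = ennreal a * ennreal b + ennreal c * ennreal d"
    using assms by (simp add: ennreal_mult)
  finally show ?thesis .
qed

theorem lemma2p2:
  fixes M Q :: real
  assumes "M > 0" and "\<bar>Q\<bar> \<le> M"
  shows "\<exists>C::real. \<forall>rs u0 v0 (k::nat) \<xi> \<Xi>.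
    is_tortoise M Q rs \<and>
    S2_tensor_field k u0 v0 \<xi> \<and> S2_tensor_field k u0 v0 \<Xi> \<and>
    (\<forall>(u, v, \<omega>)\<in>region u0 v0. \<forall>is\<in>idx k.
        Om_nabla4 M Q rs k v0 \<xi> u v \<omega> is = Om2uv M Q rs u v * \<Xi> u v \<omega> is) \<and>
    (\<bar>Q\<bar> < M \<longrightarrow> (\<exists>K. \<forall>\<^sub>F u in at_top. \<forall>\<omega>\<in>sphere 0 1.
        sqrt (pnorm2 M Q rs k \<xi> u v0 \<omega>) \<le> K * sqrt (Om2uv M Q rs u v0)))
    \<longrightarrow> (\<forall>u\<ge>u0.
      Limsup at_top (\<lambda>v. L2sq M Q rs k \<xi> u v)
        \<le> ennreal (1 / (1 - rplus M Q / rad M Q rs u v0)) * L2sq M Q rs k \<xi> u v0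
          + ennreal (1 / rplus M Q) * flux M Q rs k \<Xi> u v0
      \<and> bulk M Q rs k \<xi> u v0
        \<le> ennreal C * (L2sq M Q rs k \<xi> u v0 + ennreal (1 / rplus M Q) * flux M Q rs k \<Xi> u v0))"
proof -
  note M = assms(1) and QM = assms(2)
  define rp where "rp = rplus M Q"
  have rp: "rp > 0" using rplus_pos[OF M QM] M unfolding rp_def by linarith
  show ?thesis
  proof (rule exI[of _ "16 / rp"], (rule allI)+, rule impI)
    fix rs u0 v0 k \<xi> \<Xi>
    assume H: "is_tortoise M Q rs \<and>
      S2_tensor_field k u0 v0 \<xi> \<and> S2_tensor_field k u0 v0 \<Xi> \<and>
      (\<forall>(u, v, \<omega>)\<in>region u0 v0. \<forall>is\<in>idx k.
          Om_nabla4 M Q rs k v0 \<xi> u v \<omega> is = Om2uv M Q rs u v * \<Xi> u v \<omega> is) \<and>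
      (\<bar>Q\<bar> < M \<longrightarrow> (\<exists>K. \<forall>\<^sub>F u in at_top. \<forall>\<omega>\<in>sphere 0 1.
          sqrt (pnorm2 M Q rs k \<xi> u v0 \<omega>) \<le> K * sqrt (Om2uv M Q rs u v0)))"
    hence T: "is_tortoise M Q rs" and Fx: "S2_tensor_field k u0 v0 \<xi>" and FX: "S2_tensor_field k u0 v0 \<Xi>"
      and EQ: "\<forall>(u, v, \<omega>)\<in>region u0 v0. \<forall>is\<in>idx k.
          Om_nabla4 M Q rs k v0 \<xi> u v \<omega> is = Om2uv M Q rs u v * \<Xi> u v \<omega> is" by blast+
    show "\<forall>u\<ge>u0.
      Limsup at_top (\<lambda>v. L2sq M Q rs k \<xi> u v)
        \<le> ennreal (1 / (1 - rplus M Q / rad M Q rs u v0)) * L2sq M Q rs k \<xi> u v0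
          + ennreal (1 / rplus M Q) * flux M Q rs k \<Xi> u v0
      \<and> bulk M Q rs k \<xi> u v0
        \<le> ennreal (16 / rp) * (L2sq M Q rs k \<xi> u v0 + ennreal (1 / rplus M Q) * flux M Q rs k \<Xi> u v0)"
    proof (intro allI impI)
      fix u assume u: "u \<ge> u0"
      define r where "r = (\<lambda>v. rad M Q rs u v)"
      define Om where "Om = (\<lambda>v. Om2uv M Q rs u v)"
      define pn where "pn = (\<lambda>Z v \<omega>. pnorm2 M Q rs k Z u v \<omega>)"
      define Fv where "Fv = (\<lambda>v \<omega>. Om v * (r v)\<^sup>2 * pn \<Xi> v \<omega>)"
      define Bv where "Bv = (\<lambda>v \<omega>. Om v / (r v)\<^sup>2 * pn \<xi> v \<omega>)"
      define FL where "FL = (\<lambda>\<omega>. \<integral>\<^sup>+v. ennreal (Fv v \<omega>) * indicator {v0..} v \<partial>lborel)"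
      define BL where "BL = (\<lambda>\<omega>. \<integral>\<^sup>+v. ennreal (Bv v \<omega>) * indicator {v0..} v \<partial>lborel)"
      define h0 where "h0 = r v0 / (r v0 - rp)"
      have rder: "\<And>v S. (r has_real_derivative Om v) (at v within S)"
        unfolding r_def Om_def by (rule rad_deriv[OF M QM T])
      have rgt: "\<And>v. r v > rp" unfolding r_def rp_def by (rule rad_gt[OF M QM T])
      have Opos: "\<And>v. Om v > 0" unfolding Om_def by (rule Om2uv_pos[OF M QM T])
      have Ocont: "continuous_on UNIV Om" unfolding Om_def by (rule Om2uv_cont[OF M QM T])
      have pnx: "\<And>Z v \<omega>. pn Z v \<omega> = (\<Sum>is\<in>idx k. (Z u v \<omega> is)\<^sup>2) / (r v) ^ (2 * k)"
        by (simp add: pn_def pnorm2_def gnorm2_def r_def)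
      have xder: "((\<lambda>v. \<xi> u v \<omega> is) has_real_derivative (real k * Om v / r v * \<xi> u v \<omega> is + Om v * \<Xi> u v \<omega> is)) (at v within {v0..})"
        if \<omega>: "\<omega> \<in> sphere 0 1" and js: "is \<in> idx k" and v: "v \<ge> v0" for \<omega> "is" v
      proof -
        have d: "(\<lambda>v'. \<xi> u v' \<omega> is) differentiable (at v within {v0..})"
          by (rule field_diff[OF Fx js u v \<omega>])
        have "((\<lambda>v'. \<xi> u v' \<omega> is) has_vector_derivative vector_derivative (\<lambda>v'. \<xi> u v' \<omega> is) (at v within {v0..})) (at v within {v0..})"
          using d vector_derivative_works by blast
        hence hd: "((\<lambda>v'. \<xi> u v' \<omega> is) has_real_derivative vector_derivative (\<lambda>v'. \<xi> u v' \<omega> is) (at v within {v0..})) (at v within {v0..})"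
          by (simp add: has_real_derivative_iff_has_vector_derivative)
        have reg: "(u, v, \<omega>) \<in> region u0 v0" using u v \<omega> unfolding region_def by simp
        have "Om_nabla4 M Q rs k v0 \<xi> u v \<omega> is = Om2uv M Q rs u v * \<Xi> u v \<omega> is"
          using EQ reg js by fast
        hence "vector_derivative (\<lambda>v'. \<xi> u v' \<omega> is) (at v within {v0..}) = real k * Om v / r v * \<xi> u v \<omega> is + Om v * \<Xi> u v \<omega> is"
          unfolding Om_nabla4_def Om_def r_def by simp
        thus ?thesis using hd by simp
      qed
      have ycont: "continuous_on {v0..} (\<lambda>v. \<Xi> u v \<omega> is)" if \<omega>: "\<omega> \<in> sphere 0 1" and js: "is \<in> idx k" for \<omega> "is"
      proof -
        have "continuous_on {v0..} (\<lambda>v. \<Xi> (fst (u, v, \<omega>)) (fst (snd (u, v, \<omega>))) (snd (snd (u, v, \<omega>))) is)"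
          by (rule field_cont[OF FX js]) (use u \<omega> in \<open>auto simp: region_def intro!: continuous_intros\<close>)
        thus ?thesis by simp
      qed
      have PA: "pn \<xi> v \<omega> \<le> h0 * pn \<xi> v0 \<omega> + (1 / rp) * integral {v0..v} (\<lambda>t. Fv t \<omega>)"
        if \<omega>: "\<omega> \<in> sphere 0 1" and v: "v \<ge> v0" for \<omega> v
      proof -
        note pw = pointwise(1)[where I="idx k" and rp=rp and r=r and Om=Om and k=k
          and x="\<lambda>is v. \<xi> u v \<omega> is" and y="\<lambda>is v. \<Xi> u v \<omega> is",
          OF idx_finite rp rder rgt Opos Ocont xder[OF \<omega>] ycont[OF \<omega>] v]
        show ?thesis using pw unfolding pnx Fv_def h0_def by simp
      qed
      have PB: "integral {v0..v} (\<lambda>t. Bv t \<omega>) \<le> 4 / rp * pn \<xi> v0 \<omega> + 16 / rp\<^sup>2 * integral {v0..v} (\<lambda>t. Fv t \<omega>)"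
        if \<omega>: "\<omega> \<in> sphere 0 1" and v: "v \<ge> v0" for \<omega> v
      proof -
        note pw = pointwise(2)[where I="idx k" and rp=rp and r=r and Om=Om and k=k
          and x="\<lambda>is v. \<xi> u v \<omega> is" and y="\<lambda>is v. \<Xi> u v \<omega> is",
          OF idx_finite rp rder rgt Opos Ocont xder[OF \<omega>] ycont[OF \<omega>] v]
        show ?thesis using pw unfolding pnx Fv_def Bv_def by simp
      qed
      have Fcont: "continuous_on {v0..} (\<lambda>v. Fv v \<omega>)" if \<omega>: "\<omega> \<in> sphere 0 1" for \<omega>
        using pn_cont(2)[OF M QM T FX continuous_on_id continuous_on_const, of "{v0..}" u \<omega>] u \<omega>
        unfolding Fv_def Om_def r_def pn_def by (simp add: region_def)
      have Bcont: "continuous_on {v0..} (\<lambda>v. Bv v \<omega>)" if \<omega>: "\<omega> \<in> sphere 0 1" for \<omega>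
        using pn_cont(3)[OF M QM T Fx continuous_on_id continuous_on_const, of "{v0..}" u \<omega>] u \<omega>
        unfolding Bv_def Om_def r_def pn_def by (simp add: region_def)
      have Fnn: "Fv v \<omega> \<ge> 0" for v \<omega> unfolding Fv_def pn_def
        using Opos[of v] pn_nonneg by simp
      have Bnn: "Bv v \<omega> \<ge> 0" for v \<omega> unfolding Bv_def pn_def
        using Opos[of v] pn_nonneg by simp
      have h0: "h0 = 1 / (1 - rplus M Q / rad M Q rs u v0)"
        unfolding h0_def r_def rp_def using rgt[of v0] rp unfolding r_def rp_def by (simp add: field_simps)
      have h0pos: "h0 \<ge> 0" unfolding h0_def using rgt[of v0] rp by simp
      have EA: "ennreal (pn \<xi> v \<omega>) \<le> ennreal h0 * ennreal (pn \<xi> v0 \<omega>) + ennreal (1 / rp) * FL \<omega>"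
        if \<omega>: "\<omega> \<in> sphere 0 1" and v: "v \<ge> v0" for \<omega> v
      proof -
        have I0: "integral {v0..v} (\<lambda>t. Fv t \<omega>) \<ge> 0"
        proof (rule integral_nonneg)
          have "continuous_on {v0..v} (\<lambda>t. Fv t \<omega>)" by (rule continuous_on_subset[OF Fcont[OF \<omega>]]) auto
          thus "(\<lambda>t. Fv t \<omega>) integrable_on {v0..v}" by (rule integrable_continuous_real)
        qed (rule Fnn)
        have "ennreal (pn \<xi> v \<omega>) \<le> ennreal (h0 * pn \<xi> v0 \<omega> + (1 / rp) * integral {v0..v} (\<lambda>t. Fv t \<omega>))"
          using PA[OF \<omega> v] by (rule ennreal_leI)
        also have "\<dots> = ennreal h0 * ennreal (pn \<xi> v0 \<omega>) + ennreal (1 / rp) * ennreal (integral {v0..v} (\<lambda>t. Fv t \<omega>))"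
          by (rule ennreal_lin) (use h0pos rp I0 pn_nonneg[of M Q rs k \<xi> u v0 \<omega>] in \<open>auto simp: pn_def\<close>)
        also have "\<dots> \<le> ennreal h0 * ennreal (pn \<xi> v0 \<omega>) + ennreal (1 / rp) * FL \<omega>"
          unfolding FL_def
          by (intro add_left_mono mult_left_mono part_le[OF Fcont[OF \<omega>] Fnn v]) auto
        finally show ?thesis .
      qed
      have EB: "BL \<omega> \<le> ennreal (4 / rp) * ennreal (pn \<xi> v0 \<omega>) + ennreal (16 / rp\<^sup>2) * FL \<omega>"
        if \<omega>: "\<omega> \<in> sphere 0 1" for \<omega>
        unfolding BL_def
      proof (rule tail_le[OF Bcont[OF \<omega>] Bnn])
        fix b assume b: "b \<ge> v0"
        have I0: "integral {v0..b} (\<lambda>t. Fv t \<omega>) \<ge> 0"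
        proof (rule integral_nonneg)
          have "continuous_on {v0..b} (\<lambda>t. Fv t \<omega>)" by (rule continuous_on_subset[OF Fcont[OF \<omega>]]) auto
          thus "(\<lambda>t. Fv t \<omega>) integrable_on {v0..b}" by (rule integrable_continuous_real)
        qed (rule Fnn)
        have "ennreal (integral {v0..b} (\<lambda>t. Bv t \<omega>)) \<le> ennreal (4 / rp * pn \<xi> v0 \<omega> + 16 / rp\<^sup>2 * integral {v0..b} (\<lambda>t. Fv t \<omega>))"
          using PB[OF \<omega> b] by (rule ennreal_leI)
        also have "\<dots> = ennreal (4 / rp) * ennreal (pn \<xi> v0 \<omega>) + ennreal (16 / rp\<^sup>2) * ennreal (integral {v0..b} (\<lambda>t. Fv t \<omega>))"
          by (rule ennreal_lin) (use rp I0 pn_nonneg[of M Q rs k \<xi> u v0 \<omega>] in \<open>auto simp: pn_def\<close>)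
        also have "\<dots> \<le> ennreal (4 / rp) * ennreal (pn \<xi> v0 \<omega>) + ennreal (16 / rp\<^sup>2) * FL \<omega>"
          unfolding FL_def
          by (intro add_left_mono mult_left_mono part_le[OF Fcont[OF \<omega>] Fnn b]) auto
        finally show "ennreal (integral {v0..b} (\<lambda>t. Bv t \<omega>)) \<le> ennreal (4 / rp) * ennreal (pn \<xi> v0 \<omega>) + ennreal (16 / rp\<^sup>2) * FL \<omega>" .
      qed
      define sT where "sT = (\<lambda>z::real\<times>real\<times>real. sph (fst (snd z)) (snd (snd z)))"
      have sTc: "continuous_on UNIV sT" unfolding sT_def
        using continuous_on_compose2[OF sph_cont continuous_on_snd[OF continuous_on_id]] by simp
      have regT: "(u, fst z, sT z) \<in> region u0 v0" if "z \<in> {z. v0 \<le> fst z}" for z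
        using that u sph_sphere unfolding sT_def region_def by auto
      have KF: "K3 (\<lambda>v \<theta> \<phi>. ennreal (Fv v (sph \<theta> \<phi>)) * indicator {v0..} v) \<in> borel_measurable borel"
      proof -
        have "continuous_on {z. v0 \<le> fst z} (\<lambda>z. Fv (fst z) (sT z))"
          using pn_cont(2)[where T="{z::real\<times>real\<times>real. v0 \<le> fst z}", OF M QM T FX continuous_on_fst[OF continuous_on_id] continuous_on_subset[OF sTc subset_UNIV] regT]
          unfolding Fv_def Om_def r_def pn_def by simp
        from E_meas3[OF this] show ?thesis unfolding K3_def sT_def by simp
      qed
      have KB: "K3 (\<lambda>v \<theta> \<phi>. ennreal (Bv v (sph \<theta> \<phi>)) * indicator {v0..} v) \<in> borel_measurable borel"
      proof -
        have "continuous_on {z. v0 \<le> fst z} (\<lambda>z. Bv (fst z) (sT z))"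
          using pn_cont(3)[where T="{z::real\<times>real\<times>real. v0 \<le> fst z}", OF M QM T Fx continuous_on_fst[OF continuous_on_id] continuous_on_subset[OF sTc subset_UNIV] regT]
          unfolding Bv_def Om_def r_def pn_def by simp
        from E_meas3[OF this] show ?thesis unfolding K3_def sT_def by simp
      qed
      have mFL: "sph_meas FL"
        unfolding sph_meas_def FL_def using meas_int[OF KF] by simp
      have mP0: "sph_meas (\<lambda>\<omega>. ennreal (pn \<xi> v0 \<omega>))"
      proof (rule sph_meas_cont)
        show "continuous_on UNIV (\<lambda>z::real\<times>real. pn \<xi> v0 (sph (fst z) (snd z)))"
          using pn_cont(1)[OF M QM T Fx continuous_on_const sph_cont, of u v0] u sph_sphere
          unfolding pn_def by (simp add: region_def)
      qed
      have flux_eq: "flux M Q rs k \<Xi> u v0 = sph_int FL"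
      proof -
        have "flux M Q rs k \<Xi> u v0 = (\<integral>\<^sup>+v. sph_int (\<lambda>\<omega>. ennreal (Fv v \<omega>)) * indicator {v0..} v \<partial>lborel)"
          unfolding flux_def Fv_def Om_def r_def pn_def ..
        also have "\<dots> = sph_int FL" unfolding FL_def by (rule sph_swap[OF KF])
        finally show ?thesis .
      qed
      have bulk_eq: "bulk M Q rs k \<xi> u v0 = sph_int BL"
      proof -
        have "bulk M Q rs k \<xi> u v0 = (\<integral>\<^sup>+v. sph_int (\<lambda>\<omega>. ennreal (Bv v \<omega>)) * indicator {v0..} v \<partial>lborel)"
          unfolding bulk_def Bv_def Om_def r_def pn_def ..
        also have "\<dots> = sph_int BL" unfolding BL_def by (rule sph_swap[OF KB])
        finally show ?thesis .
      qed
      have L0: "L2sq M Q rs k \<xi> u v0 = sph_int (\<lambda>\<omega>. ennreal (pn \<xi> v0 \<omega>))"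
        unfolding L2sq_def pn_def ..
      have comb: "sph_int (\<lambda>\<omega>. ennreal a * ennreal (pn \<xi> v0 \<omega>) + ennreal b * FL \<omega>)
          = ennreal a * L2sq M Q rs k \<xi> u v0 + ennreal b * flux M Q rs k \<Xi> u v0" for a b
        unfolding L0 flux_eq
        by (simp add: sph_int_add sph_int_cmult sph_meas_cmult mP0 mFL)
      show "Limsup at_top (\<lambda>v. L2sq M Q rs k \<xi> u v)
          \<le> ennreal (1 / (1 - rplus M Q / rad M Q rs u v0)) * L2sq M Q rs k \<xi> u v0
            + ennreal (1 / rplus M Q) * flux M Q rs k \<Xi> u v0
        \<and> bulk M Q rs k \<xi> u v0
          \<le> ennreal (16 / rp) * (L2sq M Q rs k \<xi> u v0 + ennreal (1 / rplus M Q) * flux M Q rs k \<Xi> u v0)"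
      proof
        show "Limsup at_top (\<lambda>v. L2sq M Q rs k \<xi> u v)
          \<le> ennreal (1 / (1 - rplus M Q / rad M Q rs u v0)) * L2sq M Q rs k \<xi> u v0
            + ennreal (1 / rplus M Q) * flux M Q rs k \<Xi> u v0"
        proof (rule Limsup_bounded)
          show "\<forall>\<^sub>F v in at_top. L2sq M Q rs k \<xi> u v \<le> ennreal (1 / (1 - rplus M Q / rad M Q rs u v0)) * L2sq M Q rs k \<xi> u v0
            + ennreal (1 / rplus M Q) * flux M Q rs k \<Xi> u v0"
            using eventually_ge_at_top[of v0]
          proof eventually_elim
            case (elim v)
            have "L2sq M Q rs k \<xi> u v = sph_int (\<lambda>\<omega>. ennreal (pn \<xi> v \<omega>))" unfolding L2sq_def pn_def ..
            also have "\<dots> \<le> sph_int (\<lambda>\<omega>. ennreal h0 * ennreal (pn \<xi> v0 \<omega>) + ennreal (1 / rp) * FL \<omega>)"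
              by (rule sph_int_mono) (rule EA[OF _ elim])
            also have "\<dots> = ennreal h0 * L2sq M Q rs k \<xi> u v0 + ennreal (1 / rp) * flux M Q rs k \<Xi> u v0"
              by (rule comb)
            finally show ?case unfolding h0 rp_def .
          qed
        qed
        have "bulk M Q rs k \<xi> u v0 \<le> sph_int (\<lambda>\<omega>. ennreal (4 / rp) * ennreal (pn \<xi> v0 \<omega>) + ennreal (16 / rp\<^sup>2) * FL \<omega>)"
          unfolding bulk_eq by (rule sph_int_mono) (rule EB)
        also have "\<dots> = ennreal (4 / rp) * L2sq M Q rs k \<xi> u v0 + ennreal (16 / rp\<^sup>2) * flux M Q rs k \<Xi> u v0"
          by (rule comb)
        also have "\<dots> \<le> ennreal (16 / rp) * L2sq M Q rs k \<xi> u v0 + ennreal (16 / rp) * (ennreal (1 / rp) * flux M Q rs k \<Xi> u v0)"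
        proof (intro add_mono mult_right_mono)
          show "ennreal (4 / rp) \<le> ennreal (16 / rp)" using rp by (intro ennreal_leI) (simp add: divide_right_mono)
          have "ennreal (16 / rp\<^sup>2) = ennreal (16 / rp) * ennreal (1 / rp)"
            using rp by (simp add: ennreal_mult[symmetric] power2_eq_square)
          thus "ennreal (16 / rp\<^sup>2) * flux M Q rs k \<Xi> u v0 \<le> ennreal (16 / rp) * (ennreal (1 / rp) * flux M Q rs k \<Xi> u v0)"
            by (simp add: mult.assoc)
        qed auto
        also have "\<dots> = ennreal (16 / rp) * (L2sq M Q rs k \<xi> u v0 + ennreal (1 / rplus M Q) * flux M Q rs k \<Xi> u v0)"
          unfolding rp_def by (simp add: distrib_left)
        finally show "bulk M Q rs k \<xi> u v0
          \<le> ennreal (16 / rp) * (L2sq M Q rs k \<xi> u v0 + ennreal (1 / rplus M Q) * flux M Q rs k \<Xi> u v0)" .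
      qed
    qed
  qed
qed

end
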